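(* Consider the linear regression model $y=X\theta+u$ (context). Fix an index $i\le k$, $\eta_{i,n}>0$, $a_{i,n}\ge0$, and let $E_{H,i,n}=[\tilde\theta_{H,i}-\hat\sigma a_{i,n},\tilde\theta_{H,i}+\hat\sigma a_{i,n}]$. For every $n\ge2$ with $n>k$, $$\inf_{\theta\in\mathbb{R}^k,\sigma\in(0,\infty)}P_{n,\theta,\sigma}(\theta_i\in E_{H,i,n})\ \ge\ T_{n-k}\big(n^{1/2}(a_{i,n}/\xi_{i,n}-\eta_{i,n})\big)-T_{n-k}\big(-n^{1/2}a_{i,n}/\xi_{i,n}\big).$$
   Context: Model: $y=X\theta+u$ with $y\in\mathbb{R}^n$, $X$ a non-stochastic $n\times k$ matrix of rank $k\ge1$, $\theta\in\mathbb{R}^k$, $u\sim N(0,\sigma^2I_n)$, $\sigma>0$. $P_{n,\theta,\sigma}$ is the probability under $(\theta,\sigma)$. $\hat\theta_{LS}=(X'X)^{-1}X'y$, $\hat\sigma^2=(y-X\hat\theta_{LS})'(y-X\hat\theta_{LS})/(n-k)$ (defined for $n>k$), $\xi_{i,n}\ge0$ with $\xi_{i,n}^2=((X'X/n)^{-1})_{ii}$. The feasible hard-thresholding estimator is $\tilde\theta_{H,i}=\hat\theta_{LS,i}\mathbf{1}(|\hat\theta_{LS,i}|>\hat\sigma\xi_{i,n}\eta_{i,n})$. $T_m$ is the cdf of the $t$-distribution with $m$ degrees of freedom. *)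

theory Defs
  imports "HOL-Analysis.Analysis" "HOL-Probability.Probability"
begin

definition student_t_density :: "nat \<Rightarrow> real \<Rightarrow> real" where
  "student_t_density m x =
     Gamma ((real m + 1) / 2) / (sqrt (real m * pi) * Gamma (real m / 2))
     * (1 + x\<^sup>2 / real m) powr (- (real m + 1) / 2)"

definition student_t_cdf :: "nat \<Rightarrow> real \<Rightarrow> real" where
  "student_t_cdf m x = (LBINT t:{..x}. student_t_density m t)"

definition error_law :: "real \<Rightarrow> (real^'n) measure" where
  "error_law \<sigma> = density lborel (\<lambda>u. ennreal (\<Prod>j\<in>UNIV. normal_density 0 \<sigma> (u $ j)))"

definition P_model :: "real^'k^'n \<Rightarrow> real^'k \<Rightarrow> real \<Rightarrow> (real^'n) measure" where
  "P_model X \<theta> \<sigma> = distr (error_law \<sigma>) lborel (\<lambda>u. X *v \<theta> + u)"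

definition theta_LS :: "real^'k^'n \<Rightarrow> real^'n \<Rightarrow> real^'k" where
  "theta_LS X y = matrix_inv (transpose X ** X) *v (transpose X *v y)"

definition sigma_hat :: "real^'k^'n \<Rightarrow> real^'n \<Rightarrow> real" where
  "sigma_hat X y = sqrt ((norm (y - X *v theta_LS X y))\<^sup>2 / (real CARD('n) - real CARD('k)))"

definition xi :: "real^'k^'n \<Rightarrow> 'k \<Rightarrow> real" where
  "xi X i = sqrt (matrix_inv ((1 / real CARD('n)) *\<^sub>R (transpose X ** X)) $ i $ i)"

definition theta_H :: "real^'k^'n \<Rightarrow> real \<Rightarrow> 'k \<Rightarrow> real^'n \<Rightarrow> real" where
  "theta_H X \<eta> i y =
     theta_LS X y $ i * (if \<bar>theta_LS X y $ i\<bar> > sigma_hat X y * xi X i * \<eta> then 1 else 0)"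

definition E_H :: "real^'k^'n \<Rightarrow> real \<Rightarrow> real \<Rightarrow> 'k \<Rightarrow> real^'n \<Rightarrow> real set" where
  "E_H X \<eta> a i y = {theta_H X \<eta> i y - sigma_hat X y * a .. theta_H X \<eta> i y + sigma_hat X y * a}"

end

theory Submission
  imports Defs
begin

interpretation lbP: product_sigma_finite "\<lambda>_. lborel :: real measure"
  by standard

lemma vec_lambda_meas[measurable]:
  "(\<lambda>f. vec_lambda f :: real^'n) \<in> (PiM UNIV (\<lambda>_::'n. lborel)) \<rightarrow>\<^sub>M borel"
proof -
  have "(\<lambda>f. vec_lambda f :: real^'n) \<in> (PiM UNIV (\<lambda>_::'n. borel)) \<rightarrow>\<^sub>M borel"
  proof (rule borel_measurable_euclidean_space[THEN iffD2], intro ballI)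
    fix b :: "real^'n" assume "b \<in> Basis"
    then obtain i where b: "b = axis i 1" by (auto simp: Basis_vec_def)
    show "(\<lambda>f. vec_lambda f \<bullet> b) \<in> borel_measurable (PiM UNIV (\<lambda>_::'n. borel))"
      unfolding b inner_axis by simp
  qed
  moreover have "sets (PiM UNIV (\<lambda>_::'n. lborel)) = sets (PiM UNIV (\<lambda>_::'n. borel))"
    by (rule sets_PiM_cong) auto
  ultimately show ?thesis by (simp add: measurable_def space_PiM)
qed

lemma prod_Basis_vec: "(\<Prod>b\<in>(Basis :: (real^'n) set). g b) = (\<Prod>i\<in>UNIV. g (axis i 1))"
proof -
  have B: "(Basis :: (real^'n) set) = (\<lambda>i. axis i 1) ` UNIV" by (auto simp: Basis_vec_def)
  have I: "inj (\<lambda>i::'n. axis i (1::real))" by (auto intro!: injI simp: axis_eq_axis)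
  show ?thesis unfolding B prod.reindex[OF I] by (simp add: o_def)
qed

lemma lborel_vec_PiM:
  "(lborel :: (real^'n) measure) = distr (PiM UNIV (\<lambda>_::'n. lborel)) borel vec_lambda"
proof (rule lborel_eqI)
  fix l u :: "real^'n"
  assume le: "\<And>b. b \<in> Basis \<Longrightarrow> l \<bullet> b \<le> u \<bullet> b"
  have lei: "l $ i \<le> u $ i" for i using le[of "axis i 1"] by (auto simp: Basis_vec_def inner_axis)
  have eq: "vec_lambda -` box l u \<inter> space (PiM UNIV (\<lambda>_::'n. lborel)) = PiE UNIV (\<lambda>i. {l$i<..<u$i})"
    by (auto simp: space_PiM mem_box_cart PiE_def Pi_iff)
  have "emeasure (distr (PiM UNIV (\<lambda>_::'n. lborel)) borel vec_lambda) (box l u)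
       = emeasure (PiM UNIV (\<lambda>_::'n. lborel)) (PiE UNIV (\<lambda>i. {l$i<..<u$i}))"
    by (subst emeasure_distr[OF vec_lambda_meas]) (simp_all add: eq del: vec_lambda_beta)
  also have "\<dots> = (\<Prod>i\<in>UNIV. emeasure lborel {l$i<..<u$i})"
    by (rule lbP.emeasure_PiM) auto
  also have "\<dots> = (\<Prod>i\<in>UNIV. ennreal (u$i - l$i))"
    using lei by (intro prod.cong refl) simp
  also have "\<dots> = ennreal (\<Prod>i\<in>UNIV. (u$i - l$i))"
    using lei by (intro prod_ennreal) simp
  also have "\<dots> = ennreal (prod ((\<bullet>) (u - l)) Basis)"
    by (simp add: prod_Basis_vec inner_axis del: vec_lambda_beta)
  finally show "emeasure (distr (PiM UNIV (\<lambda>_::'n. lborel)) borel vec_lambda) (box l u) = ennreal (prod ((\<bullet>) (u - l)) Basis)" .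
qed (rule sets_distr)

lemma linear_borel_meas:
  fixes f :: "'a::euclidean_space \<Rightarrow> 'b::euclidean_space"
  assumes "linear f" shows "f \<in> borel_measurable borel"
  by (rule borel_measurable_continuous_onI, rule linear_continuous_on)
     (use assms in \<open>simp add: linear_conv_bounded_linear\<close>)

lemma sum_Basis_vec: "(\<Sum>b\<in>(Basis :: (real^'n) set). g b) = (\<Sum>i\<in>UNIV. g (axis i 1))"
proof -
  have B: "(Basis :: (real^'n) set) = (\<lambda>i. axis i 1) ` UNIV" by (auto simp: Basis_vec_def)
  have I: "inj (\<lambda>i::'n. axis i (1::real))" by (auto intro!: injI simp: axis_eq_axis)
  show ?thesis unfolding B sum.reindex[OF I] by (simp add: o_def)
qed

definition "COV (f :: real^'n \<Rightarrow> real^'n) \<longleftrightarrow>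
  (\<forall>g \<in> borel_measurable borel. det (matrix f) \<noteq> 0 \<longrightarrow>
     (\<integral>\<^sup>+x. g (f x) \<partial>lborel) * ennreal \<bar>det (matrix f)\<bar> = (\<integral>\<^sup>+x. g x \<partial>lborel))"

lemma COV_comp:
  assumes lf: "linear f" and lg: "linear g" and f: "COV f" and g: "COV g"
  shows "COV (f \<circ> g)"
  unfolding COV_def
proof (intro ballI impI)
  fix h :: "real^'a \<Rightarrow> ennreal" assume h[measurable]: "h \<in> borel_measurable borel"
  assume d: "det (matrix (f \<circ> g)) \<noteq> 0"
  have dm: "det (matrix (f \<circ> g)) = det (matrix f) * det (matrix g)"
    using matrix_compose[OF lg lf] by (simp add: det_mul)
  with d have df: "det (matrix f) \<noteq> 0" and dg: "det (matrix g) \<noteq> 0" by auto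
  have fm[measurable]: "f \<in> borel_measurable borel" by (rule linear_borel_meas[OF lf])
  have "(\<integral>\<^sup>+x. h ((f \<circ> g) x) \<partial>lborel) * ennreal \<bar>det (matrix (f \<circ> g))\<bar>
      = ((\<integral>\<^sup>+x. (\<lambda>y. h (f y)) (g x) \<partial>lborel) * ennreal \<bar>det (matrix g)\<bar>) * ennreal \<bar>det (matrix f)\<bar>"
    by (simp add: dm abs_mult ennreal_mult mult_ac)
  also have "\<dots> = (\<integral>\<^sup>+y. h (f y) \<partial>lborel) * ennreal \<bar>det (matrix f)\<bar>"
    using g dg unfolding COV_def by (subst bspec[OF g[unfolded COV_def]]) (auto simp: dg)
  also have "\<dots> = (\<integral>\<^sup>+y. h y \<partial>lborel)"
    using f df unfolding COV_def by auto
  finally show "(\<integral>\<^sup>+x. h ((f \<circ> g) x) \<partial>lborel) * ennreal \<bar>det (matrix (f \<circ> g))\<bar> = (\<integral>\<^sup>+y. h y \<partial>lborel)" .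
qed

lemma COV_zero:
  assumes "linear f" "\<And>x. f x $ i = 0" shows "COV f"
proof -
  have "row i (matrix f) = 0"
    using assms(2) by (simp add: row_def matrix_def vec_eq_iff)
  then have "det (matrix f) = 0" by (rule det_zero_row)
  then show ?thesis unfolding COV_def by auto
qed

lemma COV_const: "COV (\<lambda>x::real^'n. \<chi> i. c i * x$i)"
  unfolding COV_def
proof (intro ballI impI)
  let ?f = "\<lambda>x::real^'n. \<chi> i. c i * x$i"
  fix g :: "real^'n \<Rightarrow> ennreal" assume g[measurable]: "g \<in> borel_measurable borel"
  assume d: "det (matrix ?f) \<noteq> 0"
  have detf: "det (matrix ?f) = (\<Prod>i\<in>UNIV. c i)"
    by (subst det_diagonal) (auto simp: matrix_def axis_def)
  with d have c0: "c i \<noteq> 0" for i by auto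
  define c' where "c' b = c (SOME i. b = axis i (1::real))" for b :: "real^'n"
  have c'a: "c' (axis i 1) = c i" for i
    unfolding c'_def by (rule arg_cong[where f=c]) (auto simp: axis_eq_axis)
  have c'0: "c' j \<noteq> 0" if "j \<in> Basis" for j
    using that c0 c'a by (auto simp: Basis_vec_def)
  define T where "T x = 0 + (\<Sum>j\<in>Basis. (c' j * (x \<bullet> j)) *\<^sub>R j)" for x :: "real^'n"
  have Tf: "T x = ?f x" for x
  proof -
    have "T x $ k = c k * x $ k" for k
    proof -
      have "T x $ k = (\<Sum>i\<in>UNIV. (c i * x $ i) * axis i 1 $ k)"
        unfolding T_def by (simp add: sum_component sum_Basis_vec c'a inner_axis)
      also have "\<dots> = c k * x $ k"
        by (simp add: axis_def if_distrib sum.delta cong: if_cong)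
      finally show ?thesis .
    qed
    then show ?thesis by (simp add: vec_eq_iff)
  qed
  have L: "lborel = density (distr lborel borel T) (\<lambda>_. (\<Prod>j\<in>Basis. \<bar>c' j\<bar>))"
    unfolding T_def by (rule lborel_affine_euclidean) (use c'0 in auto)
  have K: "(\<Prod>j\<in>Basis. \<bar>c' j\<bar>) = \<bar>det (matrix ?f)\<bar>"
    by (simp add: prod_Basis_vec c'a detf abs_prod)
  have Tm[measurable]: "T \<in> borel_measurable borel"
    unfolding T_def by measurable
  have "(\<integral>\<^sup>+x. g x \<partial>lborel) = (\<integral>\<^sup>+x. ennreal (\<Prod>j\<in>Basis. \<bar>c' j\<bar>) * g x \<partial>distr lborel borel T)"
    by (subst L) (simp add: nn_integral_density)
  also have "\<dots> = (\<integral>\<^sup>+x. ennreal (\<Prod>j\<in>Basis. \<bar>c' j\<bar>) * g (T x) \<partial>lborel)"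
    by (simp add: nn_integral_distr)
  also have "\<dots> = (\<integral>\<^sup>+x. g (?f x) * ennreal \<bar>det (matrix ?f)\<bar> \<partial>lborel)"
    by (simp add: K Tf mult.commute)
  also have "\<dots> = (\<integral>\<^sup>+x. g (?f x) \<partial>lborel) * ennreal \<bar>det (matrix ?f)\<bar>"
  proof (rule nn_integral_multc)
    have "linear ?f" by (rule linearI) (simp_all add: vec_eq_iff algebra_simps)
    then have [measurable]: "?f \<in> borel_measurable borel" by (rule linear_borel_meas)
    show "(\<lambda>x. g (?f x)) \<in> borel_measurable lborel" by simp
  qed
  finally show "(\<integral>\<^sup>+x. g (?f x) \<partial>lborel) * ennreal \<bar>det (matrix ?f)\<bar> = (\<integral>\<^sup>+x. g x \<partial>lborel)"
    by simp
qed

lemma COV_swap: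
  fixes m n :: "'n::finite" assumes mn: "m \<noteq> n"
  shows "COV (\<lambda>x::real^'n. \<chi> i. x $ Transposition.transpose m n i)"
  unfolding COV_def
proof (intro ballI impI)
  let ?h = "\<lambda>x::real^'n. \<chi> i. x $ Transposition.transpose m n i"
  fix g :: "real^'n \<Rightarrow> ennreal" assume g[measurable]: "g \<in> borel_measurable borel"
  have lin: "linear ?h"
    by (rule linearI) (simp_all add: plus_vec_def scaleR_vec_def)
  have hm[measurable]: "?h \<in> borel_measurable borel" by (rule linear_borel_meas[OF lin])
  have "(\<chi> i j. if Transposition.transpose m n i = j then 1 else 0) = (\<chi> i j. if j = Transposition.transpose m n i then 1 else (0::real))"
    by (auto intro!: Cart_lambda_cong)
  then have "matrix ?h = transpose(\<chi> i j. mat 1 $ i $ Transposition.transpose m n j)"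
    by (auto simp: matrix_eq transpose_def axis_def mat_def matrix_def)
  then have 1: "\<bar>det (matrix ?h)\<bar> = 1"
    by (simp add: det_permute_columns permutes_swap_id sign_swap_id abs_mult)
  have p: "Transposition.transpose m n permutes (UNIV :: 'n set)"
    by (rule permutes_swap_id) auto
  have D: "distr lborel borel ?h = lborel"
  proof (rule lborel_eqI[symmetric])
    fix l u :: "real^'n"
    assume le: "\<And>b. b \<in> Basis \<Longrightarrow> l \<bullet> b \<le> u \<bullet> b"
    have lei: "l $ i \<le> u $ i" for i using le[of "axis i 1"] by (auto simp: Basis_vec_def inner_axis)
    have pre: "?h -` box l u = box (?h l) (?h u)"
    proof (rule set_eqI)
      fix x :: "real^'n"
      have "(\<forall>i. l$i < x$Transposition.transpose m n i \<and> x$Transposition.transpose m n i < u$i)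
         \<longleftrightarrow> (\<forall>i. l$Transposition.transpose m n i < x$i \<and> x$i < u$Transposition.transpose m n i)"
        by (metis transpose_involutory)
      then show "x \<in> ?h -` box l u \<longleftrightarrow> x \<in> box (?h l) (?h u)" by (simp add: mem_box_cart)
    qed
    have "emeasure (distr lborel borel ?h) (box l u) = emeasure lborel (box (?h l) (?h u))"
      by (subst emeasure_distr) (simp_all add: pre)
    also have "\<dots> = ennreal (prod ((\<bullet>) (?h u - ?h l)) Basis)"
      by (rule emeasure_lborel_box) (auto simp: Basis_vec_def inner_axis lei)
    also have "prod ((\<bullet>) (?h u - ?h l)) Basis = (\<Prod>i\<in>UNIV. u $ Transposition.transpose m n i - l $ Transposition.transpose m n i)"
      by (simp only: prod_Basis_vec) (simp add: inner_axis)
    also have "(\<Prod>i\<in>UNIV. u $ Transposition.transpose m n i - l $ Transposition.transpose m n i)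
         = (\<Prod>i\<in>UNIV. u $ i - l $ i)"
      using prod.permute[OF p, of "\<lambda>i. u $ i - l $ i"] by (simp add: o_def)
    also have "\<dots> = prod ((\<bullet>) (u - l)) Basis"
      by (simp add: prod_Basis_vec inner_axis)
    finally show "emeasure (distr lborel borel ?h) (box l u) = ennreal (prod ((\<bullet>) (u - l)) Basis)" .
  qed simp
  have "(\<integral>\<^sup>+x. g (?h x) \<partial>lborel) = (\<integral>\<^sup>+x. g x \<partial>distr lborel borel ?h)"
    by (simp add: nn_integral_distr)
  then show "(\<integral>\<^sup>+x. g (?h x) \<partial>lborel) * ennreal \<bar>det (matrix ?h)\<bar> = (\<integral>\<^sup>+x. g x \<partial>lborel)"
    by (simp add: D 1)
qed

lemma COV_shear:
  fixes m n :: "'n::finite" assumes mn: "m \<noteq> n"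
  shows "COV (\<lambda>x::real^'n. \<chi> i. if i = m then x$m + x$n else x$i)"
  unfolding COV_def
proof (intro ballI impI)
  let ?h = "\<lambda>x::real^'n. \<chi> i. if i = m then x$m + x$n else x$i"
  fix g :: "real^'n \<Rightarrow> ennreal" assume g[measurable]: "g \<in> borel_measurable borel"
  have "matrix ?h = (\<chi> k. if k = m then row m (mat 1) + 1 *s row n (mat 1) else row k (mat 1 :: real^'n^'n))"
    using mn by (auto simp: vec_eq_iff matrix_def row_def mat_def axis_def)
  then have 1: "det (matrix ?h) = 1"
    using det_row_operation[OF mn, of "mat 1 :: real^'n^'n" 1] by simp
  let ?I = "UNIV - {m}"
  have U: "insert m ?I = (UNIV :: 'n set)" by auto
  have gv[measurable]: "(\<lambda>f. g (vec_lambda f)) \<in> borel_measurable (PiM UNIV (\<lambda>_::'n. lborel))"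
    by measurable
  have hv: "?h (vec_lambda f) = vec_lambda (f(m := f m + f n))" for f
    using mn by (auto simp: vec_eq_iff)
  have lin: "linear ?h" by (rule linearI) (simp_all add: vec_eq_iff algebra_simps)
  have hm[measurable]: "?h \<in> borel_measurable borel" by (rule linear_borel_meas[OF lin])
  have upd: "(\<lambda>f. f(m := f m + f n)) \<in> PiM UNIV (\<lambda>_::'n. lborel) \<rightarrow>\<^sub>M PiM UNIV (\<lambda>_::'n. lborel)"
  proof -
    show ?thesis unfolding fun_upd_def
      by (rule measurable_PiM_single') (auto simp: space_PiM)
  qed
  have gh[measurable]: "(\<lambda>f. g (vec_lambda (f(m := f m + f n)))) \<in> borel_measurable (PiM UNIV (\<lambda>_::'n. lborel))"
    using measurable_comp[OF measurable_comp[OF upd vec_lambda_meas] g] by (simp add: o_def)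
  have ghm: "(\<lambda>x. g (?h x)) \<in> borel_measurable borel" by measurable
  have "(\<integral>\<^sup>+x. g (?h x) \<partial>lborel) = (\<integral>\<^sup>+x. g (?h x) \<partial>distr (PiM UNIV (\<lambda>_::'n. lborel)) borel vec_lambda)"
    by (subst lborel_vec_PiM) (rule refl)
  also have "\<dots> = (\<integral>\<^sup>+f. g (?h (vec_lambda f)) \<partial>PiM UNIV (\<lambda>_::'n. lborel))"
    by (rule nn_integral_distr) (simp_all add: ghm)
  also have "\<dots> = (\<integral>\<^sup>+f. g (vec_lambda (f(m := f m + f n))) \<partial>PiM UNIV (\<lambda>_::'n. lborel))"
    by (simp only: hv)
  also have "\<dots> = (\<integral>\<^sup>+f. (\<integral>\<^sup>+t. g (vec_lambda ((f(m:=t))(m := t + f n))) \<partial>lborel) \<partial>PiM ?I (\<lambda>_::'n. lborel))"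
  proof -
    have "(\<integral>\<^sup>+f. g (vec_lambda (f(m := f m + f n))) \<partial>PiM (insert m ?I) (\<lambda>_::'n. lborel))
      = (\<integral>\<^sup>+f. (\<integral>\<^sup>+t. g (vec_lambda ((f(m:=t))(m := (f(m:=t)) m + (f(m:=t)) n))) \<partial>lborel) \<partial>PiM ?I (\<lambda>_::'n. lborel))"
      by (rule lbP.product_nn_integral_insert) (simp_all add: U gh)
    then show ?thesis using mn by (simp add: U)
  qed
  also have "\<dots> = (\<integral>\<^sup>+f. (\<integral>\<^sup>+t. g (vec_lambda (f(m:=t))) \<partial>lborel) \<partial>PiM ?I (\<lambda>_::'n. lborel))"
  proof (rule nn_integral_cong)
    fix f :: "'n \<Rightarrow> real" assume "f \<in> space (PiM ?I (\<lambda>_::'n. lborel))"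
    have "(\<lambda>t. f(m:=t)) \<in> borel \<rightarrow>\<^sub>M PiM UNIV (\<lambda>_::'n. lborel)"
      unfolding fun_upd_def by (rule measurable_PiM_single') (auto simp: space_PiM)
    then have m1[measurable]: "(\<lambda>t. g (vec_lambda (f(m:=t)))) \<in> borel_measurable borel"
      using measurable_comp[OF _ gv] by (simp add: o_def)
    show "(\<integral>\<^sup>+t. g (vec_lambda ((f(m:=t))(m := t + f n))) \<partial>lborel) = (\<integral>\<^sup>+t. g (vec_lambda (f(m:=t))) \<partial>lborel)"
      using nn_integral_real_affine[OF m1, of 1 "f n"] mn by (simp add: add.commute)
  qed
  also have "\<dots> = (\<integral>\<^sup>+f. g (vec_lambda f) \<partial>PiM UNIV (\<lambda>_::'n. lborel))"
  proof -
    have "(\<integral>\<^sup>+f. g (vec_lambda f) \<partial>PiM (insert m ?I) (\<lambda>_::'n. lborel))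
      = (\<integral>\<^sup>+f. (\<integral>\<^sup>+t. g (vec_lambda (f(m:=t))) \<partial>lborel) \<partial>PiM ?I (\<lambda>_::'n. lborel))"
      by (rule lbP.product_nn_integral_insert) (simp_all add: U gv)
    then show ?thesis by (simp add: U)
  qed
  also have "\<dots> = (\<integral>\<^sup>+x. g x \<partial>lborel)"
  proof -
    have "(\<integral>\<^sup>+x. g x \<partial>lborel) = (\<integral>\<^sup>+x. g x \<partial>distr (PiM UNIV (\<lambda>_::'n. lborel)) borel vec_lambda)"
      by (subst lborel_vec_PiM) (rule refl)
    also have "\<dots> = (\<integral>\<^sup>+f. g (vec_lambda f) \<partial>PiM UNIV (\<lambda>_::'n. lborel))"
      by (rule nn_integral_distr) simp_all
    finally show ?thesis by simp
  qed
  finally show "(\<integral>\<^sup>+x. g (?h x) \<partial>lborel) * ennreal \<bar>det (matrix ?h)\<bar> = (\<integral>\<^sup>+x. g x \<partial>lborel)"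
    by (simp add: 1)
qed

lemma lin_cov:
  fixes f :: "real^'n \<Rightarrow> real^'n"
  assumes lf: "linear f" and d: "det (matrix f) \<noteq> 0" and g: "g \<in> borel_measurable borel"
  shows "(\<integral>\<^sup>+x. g (f x) \<partial>lborel) * ennreal \<bar>det (matrix f)\<bar> = (\<integral>\<^sup>+x. g x \<partial>lborel)"
proof -
  have "COV f"
    by (rule induct_linear_elementary[OF lf])
       (auto intro: COV_comp[unfolded comp_def] COV_zero COV_const COV_swap COV_shear)
  then show ?thesis using d g unfolding COV_def by auto
qed

abbreviation "NM \<sigma> \<equiv> density lborel (normal_density 0 \<sigma>)"

lemma NM_prod_sf: assumes "0 < \<sigma>" shows "product_sigma_finite (\<lambda>_. NM \<sigma>)"
proof -
  interpret prob_space "NM \<sigma>" using assms by (rule prob_space_normal_density)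
  show ?thesis by (unfold_locales)
qed

lemma sets_NM[simp, measurable_cong]: "sets (NM \<sigma>) = sets borel" by simp

lemma PiM_NM_density: assumes sp: "0 < \<sigma>" shows
  "density (PiM UNIV (\<lambda>_::'n::finite. lborel)) (\<lambda>f. \<Prod>j\<in>UNIV. ennreal (normal_density 0 \<sigma> (f j)))
   = PiM UNIV (\<lambda>_::'n. NM \<sigma>)"
proof (rule product_sigma_finite.PiM_eqI[OF NM_prod_sf[OF sp]])
  show "sets (density (PiM UNIV (\<lambda>_::'n::finite. lborel)) (\<lambda>f. \<Prod>j\<in>UNIV. ennreal (normal_density 0 \<sigma> (f j))))
     = sets (PiM UNIV (\<lambda>_::'n. NM \<sigma>))"
    by (simp cong: sets_PiM_cong)
  fix A :: "'n \<Rightarrow> real set" assume A: "\<And>i. i \<in> UNIV \<Longrightarrow> A i \<in> sets (NM \<sigma>)"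
  then have A'[measurable]: "A i \<in> sets borel" for i by simp
  have ind: "indicator (PiE UNIV A) f = (\<Prod>j\<in>UNIV. indicator (A j) (f j) :: ennreal)" for f :: "'n \<Rightarrow> real"
  proof (cases "\<forall>j. f j \<in> A j")
    case True then show ?thesis by (simp add: indicator_def PiE_iff)
  next
    case False
    then obtain j where "f j \<notin> A j" by auto
    then have "(\<Prod>j\<in>UNIV. indicator (A j) (f j) :: ennreal) = 0"
      by (intro prod_zero) (auto intro!: exI[of _ j] simp: indicator_def)
    with False show ?thesis by (simp add: indicator_def PiE_iff)
  qed
  have PA: "PiE UNIV A \<in> sets (PiM UNIV (\<lambda>_::'n. lborel))"
    by (rule sets_PiM_I_finite) auto
  have "emeasure (density (PiM UNIV (\<lambda>_::'n::finite. lborel)) (\<lambda>f. \<Prod>j\<in>UNIV. ennreal (normal_density 0 \<sigma> (f j)))) (PiE UNIV A)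
      = (\<integral>\<^sup>+f. (\<Prod>j\<in>UNIV. ennreal (normal_density 0 \<sigma> (f j))) * indicator (PiE UNIV A) f \<partial>PiM UNIV (\<lambda>_::'n. lborel))"
    by (rule emeasure_density[OF _ PA]) measurable
  also have "\<dots> = (\<integral>\<^sup>+f. (\<Prod>j\<in>UNIV. ennreal (normal_density 0 \<sigma> (f j)) * indicator (A j) (f j)) \<partial>PiM UNIV (\<lambda>_::'n. lborel))"
    by (simp add: ind prod.distrib)
  also have "\<dots> = (\<Prod>j\<in>UNIV. (\<integral>\<^sup>+x. ennreal (normal_density 0 \<sigma> x) * indicator (A j) x \<partial>lborel))"
    by (rule lbP.product_nn_integral_prod) auto
  also have "\<dots> = (\<Prod>j\<in>UNIV. emeasure (NM \<sigma>) (A j))"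
    by (simp add: emeasure_density)
  finally show "emeasure (density (PiM UNIV (\<lambda>_::'n::finite. lborel)) (\<lambda>f. \<Prod>j\<in>UNIV. ennreal (normal_density 0 \<sigma> (f j)))) (PiE UNIV A)
      = (\<Prod>j\<in>UNIV. emeasure (NM \<sigma>) (A j))" .
qed simp

lemma error_law_PiM: assumes sp: "0 < \<sigma>" shows
  "(error_law \<sigma> :: (real^'n) measure) = distr (PiM UNIV (\<lambda>_::'n. NM \<sigma>)) borel vec_lambda"
proof -
  have Gm: "(\<lambda>u::real^'n. ennreal (\<Prod>j\<in>UNIV. normal_density 0 \<sigma> (u $ j))) \<in> borel_measurable borel"
    by measurable
  have "error_law \<sigma> = density (distr (PiM UNIV (\<lambda>_::'n. lborel)) borel vec_lambda)
                         (\<lambda>u::real^'n. ennreal (\<Prod>j\<in>UNIV. normal_density 0 \<sigma> (u $ j)))"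
    unfolding error_law_def by (subst lborel_vec_PiM) (rule refl)
  also have "\<dots> = distr (density (PiM UNIV (\<lambda>_::'n. lborel)) (\<lambda>f. ennreal (\<Prod>j\<in>UNIV. normal_density 0 \<sigma> (f j)))) borel vec_lambda"
    by (subst density_distr[OF Gm vec_lambda_meas]) simp
  also have "(\<lambda>f::'n\<Rightarrow>real. ennreal (\<Prod>j\<in>UNIV. normal_density 0 \<sigma> (f j))) = (\<lambda>f. \<Prod>j\<in>UNIV. ennreal (normal_density 0 \<sigma> (f j)))"
    by (simp add: prod_ennreal)
  finally show ?thesis by (simp add: PiM_NM_density[OF sp])
qed

lemma prob_space_error_law: assumes sp: "0 < \<sigma>" shows "prob_space (error_law \<sigma> :: (real^'n) measure)"
proof -
  have "prob_space (PiM UNIV (\<lambda>_::'n. NM \<sigma>))"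
    by (rule prob_space_PiM) (rule prob_space_normal_density[OF sp])
  then show ?thesis unfolding error_law_PiM[OF sp]
    by (rule prob_space.prob_space_distr) simp
qed

lemma sets_error_law[simp, measurable_cong]: "sets (error_law \<sigma>) = sets borel"
  by (simp add: error_law_def)

lemma error_law_density_norm:
  "(\<Prod>j\<in>UNIV. normal_density 0 \<sigma> ((u::real^'n) $ j))
     = (1 / sqrt (2 * pi * \<sigma>\<^sup>2)) ^ CARD('n) * exp (- (norm u)\<^sup>2 / (2 * \<sigma>\<^sup>2))"
proof -
  have n2: "(norm u)\<^sup>2 = (\<Sum>j\<in>UNIV. (u $ j)\<^sup>2)"
    by (subst power2_norm_eq_inner) (simp add: inner_vec_def power2_eq_square)
  have "(\<Prod>j\<in>UNIV. normal_density 0 \<sigma> (u $ j)) = (\<Prod>j\<in>UNIV. (1 / sqrt (2 * pi * \<sigma>\<^sup>2)) * exp (- (u $ j)\<^sup>2 / (2 * \<sigma>\<^sup>2)))"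
    by (simp add: normal_density_def)
  also have "\<dots> = (1 / sqrt (2 * pi * \<sigma>\<^sup>2)) ^ CARD('n) * (\<Prod>j\<in>UNIV. exp (- (u $ j)\<^sup>2 / (2 * \<sigma>\<^sup>2)))"
    by (simp only: prod.distrib prod_constant card_UNIV)
  also have "(\<Prod>j\<in>UNIV. exp (- (u $ j)\<^sup>2 / (2 * \<sigma>\<^sup>2))) = exp (\<Sum>j\<in>UNIV. - (u $ j)\<^sup>2 / (2 * \<sigma>\<^sup>2))"
    by (simp add: exp_sum)
  also have "(\<Sum>j\<in>UNIV. - (u $ j)\<^sup>2 / (2 * \<sigma>\<^sup>2)) = - (norm u)\<^sup>2 / (2 * \<sigma>\<^sup>2)"
    by (simp add: n2 sum_divide_distrib sum_negf)
  finally show ?thesis .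
qed

lemma error_law_orth_inv:
  fixes Q :: "real^'n \<Rightarrow> real^'n"
  assumes Q: "orthogonal_transformation Q" and g[measurable]: "g \<in> borel_measurable borel"
  shows "(\<integral>\<^sup>+u. g (Q u) \<partial>error_law \<sigma>) = (\<integral>\<^sup>+u. g u \<partial>error_law \<sigma>)"
proof -
  let ?G = "\<lambda>u::real^'n. ennreal (\<Prod>j\<in>UNIV. normal_density 0 \<sigma> (u $ j))"
  have Gm[measurable]: "?G \<in> borel_measurable borel" by measurable
  have lin: "linear Q" using Q by (rule orthogonal_transformation_linear)
  have Qm[measurable]: "Q \<in> borel_measurable borel" by (rule linear_borel_meas[OF lin])
  have d1: "\<bar>det (matrix Q)\<bar> = 1" using Q by simp
  have GQ: "?G (Q u) = ?G u" for u
    using orthogonal_transformation_norm[OF Q] by (simp add: error_law_density_norm)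
  have "(\<integral>\<^sup>+u. g (Q u) \<partial>error_law \<sigma>) = (\<integral>\<^sup>+u. ?G u * g (Q u) \<partial>lborel)"
    unfolding error_law_def by (rule nn_integral_density) simp_all
  also have "\<dots> = (\<integral>\<^sup>+u. (\<lambda>v. ?G v * g v) (Q u) \<partial>lborel) * ennreal \<bar>det (matrix Q)\<bar>"
    by (simp add: GQ d1)
  also have "\<dots> = (\<integral>\<^sup>+u. ?G u * g u \<partial>lborel)"
    by (rule lin_cov[OF lin]) (use d1 in auto)
  also have "\<dots> = (\<integral>\<^sup>+u. g u \<partial>error_law \<sigma>)"
    unfolding error_law_def by (rule nn_integral_density[symmetric]) simp_all
  finally show ?thesis .
qed

lemma int_out_j0:
  fixes j0 :: "'n::finite" and F :: "real \<Rightarrow> real^'n \<Rightarrow> ennreal"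
  assumes sp: "0 < \<sigma>"
    and Fm[measurable]: "(\<lambda>p. F (fst p) (snd p)) \<in> borel_measurable (borel \<Otimes>\<^sub>M borel)"
    and inv: "\<And>t y s. F t (\<chi> j. if j = j0 then s else y$j) = F t y"
  shows "(\<integral>\<^sup>+y. F (y$j0) y \<partial>error_law \<sigma>) = (\<integral>\<^sup>+y. (\<integral>\<^sup>+t. F t y \<partial>NM \<sigma>) \<partial>error_law \<sigma>)"
proof -
  interpret P: product_sigma_finite "\<lambda>_. NM \<sigma>" by (rule NM_prod_sf[OF sp])
  interpret N: prob_space "NM \<sigma>" by (rule prob_space_normal_density[OF sp])
  let ?I = "UNIV - {j0}"
  have U: "insert j0 ?I = (UNIV :: 'n set)" by auto
  have vm[measurable]: "(\<lambda>f. vec_lambda f :: real^'n) \<in> (PiM UNIV (\<lambda>_::'n. NM \<sigma>)) \<rightarrow>\<^sub>M borel"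
    using vec_lambda_meas by (simp cong: measurable_cong_sets sets_PiM_cong)
  have m1: "(\<lambda>f. F (f j0) (vec_lambda f)) \<in> borel_measurable (PiM UNIV (\<lambda>_::'n. NM \<sigma>))"
  proof -
    have "(\<lambda>f. (f j0, vec_lambda f :: real^'n)) \<in> PiM UNIV (\<lambda>_::'n. NM \<sigma>) \<rightarrow>\<^sub>M borel \<Otimes>\<^sub>M borel"
      by measurable
    from measurable_comp[OF this Fm] show ?thesis by (simp add: o_def)
  qed
  have m2b: "(\<lambda>y. \<integral>\<^sup>+t. F t y \<partial>NM \<sigma>) \<in> borel_measurable (borel :: (real^'n) measure)"
  proof -
    have "(\<lambda>(y,t). F t y) \<in> borel_measurable ((borel :: (real^'n) measure) \<Otimes>\<^sub>M NM \<sigma>)"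
    proof -
      have "(\<lambda>(y::real^'n,t::real). (t, y)) \<in> (borel \<Otimes>\<^sub>M NM \<sigma>) \<rightarrow>\<^sub>M (borel \<Otimes>\<^sub>M borel)"
        by measurable
      from measurable_comp[OF this Fm] show ?thesis by (simp add: o_def case_prod_beta)
    qed
    moreover have "sigma_finite_measure (NM \<sigma>)"
      by (rule prob_space_imp_sigma_finite[OF prob_space_normal_density[OF sp]])
    ultimately show ?thesis using sigma_finite_measure.borel_measurable_nn_integral by blast
  qed
  have m2: "(\<lambda>f. \<integral>\<^sup>+t. F t (vec_lambda f) \<partial>NM \<sigma>) \<in> borel_measurable (PiM UNIV (\<lambda>_::'n. NM \<sigma>))"
    using measurable_comp[OF vm m2b] by (simp add: o_def)
  have m1b: "(\<lambda>y::real^'n. F (y$j0) y) \<in> borel_measurable borel"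
  proof -
    have "(\<lambda>y::real^'n. (y$j0, y)) \<in> borel \<rightarrow>\<^sub>M borel \<Otimes>\<^sub>M borel" by measurable
    from measurable_comp[OF this Fm] show ?thesis by (simp add: o_def)
  qed
  have "(\<integral>\<^sup>+y. F (y$j0) y \<partial>error_law \<sigma>) = (\<integral>\<^sup>+f. F (f j0) (vec_lambda f) \<partial>PiM UNIV (\<lambda>_::'n. NM \<sigma>))"
    by (subst error_law_PiM[OF sp]) (subst nn_integral_distr[OF vm], simp_all add: m1b)
  also have "\<dots> = (\<integral>\<^sup>+f. (\<integral>\<^sup>+t. F t (vec_lambda (f(j0:=t))) \<partial>NM \<sigma>) \<partial>PiM ?I (\<lambda>_::'n. NM \<sigma>))"
  proof -
    have "(\<integral>\<^sup>+f. F (f j0) (vec_lambda f) \<partial>PiM (insert j0 ?I) (\<lambda>_::'n. NM \<sigma>))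
      = (\<integral>\<^sup>+f. (\<integral>\<^sup>+t. F ((f(j0:=t)) j0) (vec_lambda (f(j0:=t))) \<partial>NM \<sigma>) \<partial>PiM ?I (\<lambda>_::'n. NM \<sigma>))"
      by (rule P.product_nn_integral_insert) (simp_all add: U m1)
    then show ?thesis by (simp add: U)
  qed
  also have "\<dots> = (\<integral>\<^sup>+f. (\<integral>\<^sup>+s. (\<integral>\<^sup>+t. F t (vec_lambda (f(j0:=s))) \<partial>NM \<sigma>) \<partial>NM \<sigma>) \<partial>PiM ?I (\<lambda>_::'n. NM \<sigma>))"
  proof (rule nn_integral_cong)
    fix f :: "'n \<Rightarrow> real"
    have e: "F t (vec_lambda (f(j0:=s))) = F t (vec_lambda (f(j0:=t)))" for s t
    proof -
      have "vec_lambda (f(j0:=s)) = (\<chi> j. if j = j0 then s else (vec_lambda (f(j0:=t)) :: real^'n) $ j)"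
        by (simp add: vec_eq_iff)
      then show ?thesis by (simp only: inv)
    qed
    show "(\<integral>\<^sup>+t. F t (vec_lambda (f(j0:=t))) \<partial>NM \<sigma>) = (\<integral>\<^sup>+s. (\<integral>\<^sup>+t. F t (vec_lambda (f(j0:=s))) \<partial>NM \<sigma>) \<partial>NM \<sigma>)"
    proof -
      have "(\<integral>\<^sup>+t. F t (vec_lambda (f(j0:=s))) \<partial>NM \<sigma>) = (\<integral>\<^sup>+t. F t (vec_lambda (f(j0:=t))) \<partial>NM \<sigma>)" for s
        by (rule nn_integral_cong) (rule e)
      moreover have "emeasure (NM \<sigma>) UNIV = 1" using N.emeasure_space_1 by simp
      ultimately show ?thesis by (simp del: fun_upd_apply)
    qed
  qed
  also have "\<dots> = (\<integral>\<^sup>+f. (\<integral>\<^sup>+t. F t (vec_lambda f) \<partial>NM \<sigma>) \<partial>PiM UNIV (\<lambda>_::'n. NM \<sigma>))"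
  proof -
    have "(\<integral>\<^sup>+f. (\<integral>\<^sup>+t. F t (vec_lambda f) \<partial>NM \<sigma>) \<partial>PiM (insert j0 ?I) (\<lambda>_::'n. NM \<sigma>))
      = (\<integral>\<^sup>+f. (\<integral>\<^sup>+s. (\<integral>\<^sup>+t. F t (vec_lambda (f(j0:=s))) \<partial>NM \<sigma>) \<partial>NM \<sigma>) \<partial>PiM ?I (\<lambda>_::'n. NM \<sigma>))"
      by (rule P.product_nn_integral_insert) (simp_all add: U m2)
    then show ?thesis by (simp add: U)
  qed
  also have "\<dots> = (\<integral>\<^sup>+y. (\<integral>\<^sup>+t. F t y \<partial>NM \<sigma>) \<partial>error_law \<sigma>)"
    by (subst error_law_PiM[OF sp]) (rule nn_integral_distr[OF vm, symmetric], simp add: m2b)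
  finally show ?thesis .
qed

definition RS :: "'n set \<Rightarrow> real^'n::finite \<Rightarrow> real" where
  "RS S y = sqrt (\<Sum>j\<in>S. (y$j)\<^sup>2)"

lemma RS_meas[measurable]: "RS S \<in> borel_measurable borel"
  unfolding RS_def by measurable

lemma RS_nonneg: "RS S y \<ge> 0" unfolding RS_def by (simp add: sum_nonneg)

lemma key_alg:
  fixes s A Nsq m \<sigma> :: real
  assumes m: "m > 0" and A: "A \<ge> 0"
  defines "lam \<equiv> 1 + s\<^sup>2 / m"
  shows "exp (- (Nsq - A + A / lam) / (2 * \<sigma>\<^sup>2)) * exp (- (s * (sqrt A / sqrt lam) / sqrt m)\<^sup>2 / (2 * \<sigma>\<^sup>2))
         = exp (- Nsq / (2 * \<sigma>\<^sup>2))"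
proof -
  have l: "lam > 0" unfolding lam_def using m by (simp add: add_pos_nonneg)
  have sq: "(s * (sqrt A / sqrt lam) / sqrt m)\<^sup>2 = s\<^sup>2 * A / (lam * m)"
    using l m A by (simp add: power_divide power_mult_distrib real_sqrt_pow2)
  have "A / lam + s\<^sup>2 * A / (lam * m) = A"
  proof -
    have "A / lam + s\<^sup>2 * A / (lam * m) = A * (1 + s\<^sup>2 / m) / lam"
      using l m by (simp add: field_simps)
    also have "\<dots> = A" using l unfolding lam_def by simp
    finally show ?thesis .
  qed
  then have XT: "Nsq - A + A / lam + s\<^sup>2 * A / (lam * m) = Nsq" by simp
  have "- (Nsq - A + A / lam) / (2 * \<sigma>\<^sup>2) + - (s * (sqrt A / sqrt lam) / sqrt m)\<^sup>2 / (2 * \<sigma>\<^sup>2) = - Nsq / (2 * \<sigma>\<^sup>2)"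
    by (simp only: sq add_divide_distrib[symmetric] minus_add_distrib[symmetric] XT)
  then show ?thesis by (simp add: exp_add[symmetric])
qed

lemma scale_H:
  fixes S :: "'n::finite set" and s \<sigma> :: real
  assumes sp: "0 < \<sigma>" and Sne: "S \<noteq> {}"
  defines "m \<equiv> real (card S)"
  defines "lam \<equiv> 1 + s\<^sup>2 / m"
  shows "(\<integral>\<^sup>+y. ennreal (normal_density 0 \<sigma> (s * RS S y / sqrt m) * (RS S y / sqrt m)) \<partial>error_law \<sigma>)
       = ennreal (lam powr (- (m + 1) / 2)) *
         (\<integral>\<^sup>+y. ennreal (1 / sqrt (2 * pi * \<sigma>\<^sup>2) * RS S y / sqrt m) \<partial>error_law \<sigma>)"
proof -
  have m0: "m > 0" unfolding m_def using Sne by (simp add: card_gt_0_iff)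
  have l: "lam > 0" unfolding lam_def using m0 by (simp add: add_pos_nonneg)
  define c where "c = 1 / sqrt (2 * pi * \<sigma>\<^sup>2)"
  have c0: "c > 0" unfolding c_def using sp by simp
  let ?G = "\<lambda>u::real^'n. ennreal (\<Prod>j\<in>UNIV. normal_density 0 \<sigma> (u $ j))"
  have Gm[measurable]: "?G \<in> borel_measurable borel" by measurable
  define D where "D y = (\<chi> j. if j \<in> S then y$j / sqrt lam else y$j)" for y :: "real^'n"
  have lin: "linear D" unfolding D_def
    by (rule linearI) (simp_all add: vec_eq_iff add_divide_distrib)
  have detD: "det (matrix D) = (1 / sqrt lam) ^ card S"
  proof -
    have "det (matrix D) = (\<Prod>i\<in>UNIV. matrix D $ i $ i)"
      by (rule det_diagonal) (simp add: matrix_def D_def axis_def)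
    also have "\<dots> = (\<Prod>i\<in>UNIV. if i \<in> S then 1 / sqrt lam else 1)"
      by (rule prod.cong) (simp_all add: matrix_def D_def axis_def)
    also have "\<dots> = (1 / sqrt lam) ^ card S"
      by (simp add: prod.If_cases Int_def)
    finally show ?thesis .
  qed
  have detD0: "det (matrix D) \<noteq> 0" using l by (simp add: detD)
  define q where "q y = ?G y * ennreal (normal_density 0 \<sigma> (s * RS S y / sqrt m) * (RS S y / sqrt m))" for y
  have qm[measurable]: "q \<in> borel_measurable borel" unfolding q_def by measurable
  have qD: "q (D y) = ?G y * ennreal (c * RS S y / sqrt m * (1 / sqrt lam))" for y
  proof -
    define A where "A = (\<Sum>j\<in>S. (y$j)\<^sup>2)"
    have A0: "A \<ge> 0" unfolding A_def by (simp add: sum_nonneg)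
    have RSy: "RS S y = sqrt A" unfolding RS_def A_def ..
    have RSD: "RS S (D y) = sqrt A / sqrt lam"
    proof -
      have "(\<Sum>j\<in>S. ((D y)$j)\<^sup>2) = (\<Sum>j\<in>S. (y$j)\<^sup>2 / lam)"
        using l by (intro sum.cong) (simp_all add: D_def power_divide)
      also have "\<dots> = A / lam" unfolding A_def by (simp add: sum_divide_distrib)
      finally show ?thesis unfolding RS_def by (simp add: real_sqrt_divide)
    qed
    have n2: "(norm u)\<^sup>2 = (\<Sum>j\<in>UNIV. (u $ j)\<^sup>2)" for u :: "real^'n"
      by (subst power2_norm_eq_inner) (simp add: inner_vec_def power2_eq_square)
    have ND: "(norm (D y))\<^sup>2 = (norm y)\<^sup>2 - A + A / lam"
    proof -
      have "(D y $ j)\<^sup>2 = (if j \<in> S then (y$j)\<^sup>2 / lam else (y$j)\<^sup>2)" for j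
        using l by (simp add: D_def power_divide)
      then have "(norm (D y))\<^sup>2 = (\<Sum>j\<in>UNIV. if j \<in> S then (y$j)\<^sup>2 / lam else (y$j)\<^sup>2)"
        by (simp add: n2)
      also have "\<dots> = (\<Sum>j\<in>S. (y$j)\<^sup>2 / lam) + (\<Sum>j\<in>-S. (y$j)\<^sup>2)"
        by (simp add: sum.If_cases Int_def Compl_eq)
      also have "(\<Sum>j\<in>S. (y$j)\<^sup>2 / lam) = A / lam" unfolding A_def by (simp add: sum_divide_distrib)
      also have "(\<Sum>j\<in>-S. (y$j)\<^sup>2) = (norm y)\<^sup>2 - A"
      proof -
        have "(\<Sum>j\<in>UNIV. (y$j)\<^sup>2) = (\<Sum>j\<in>S. (y$j)\<^sup>2) + (\<Sum>j\<in>-S. (y$j)\<^sup>2)"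
          using sum.If_cases[of UNIV "\<lambda>j. j \<in> S" "\<lambda>j. (y$j)\<^sup>2" "\<lambda>j. (y$j)\<^sup>2"] by (simp add: Int_def Compl_eq)
        then show ?thesis unfolding A_def n2 by simp
      qed
      finally show ?thesis by simp
    qed
    have "normal_density 0 \<sigma> (s * RS S (D y) / sqrt m) = c * exp (- (s * (sqrt A / sqrt lam) / sqrt m)\<^sup>2 / (2 * \<sigma>\<^sup>2))"
      by (simp add: normal_density_def c_def RSD)
    moreover have "(\<Prod>j\<in>UNIV. normal_density 0 \<sigma> (D y $ j)) = c ^ CARD('n) * exp (- ((norm y)\<^sup>2 - A + A / lam) / (2 * \<sigma>\<^sup>2))"
      by (simp add: error_law_density_norm ND c_def)
    moreover have "(\<Prod>j\<in>UNIV. normal_density 0 \<sigma> (y $ j)) = c ^ CARD('n) * exp (- (norm y)\<^sup>2 / (2 * \<sigma>\<^sup>2))"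
      by (simp add: error_law_density_norm c_def)
    moreover have kk: "exp (- ((norm y)\<^sup>2 - A + A / lam) / (2 * \<sigma>\<^sup>2)) * exp (- (s * (sqrt A / sqrt lam) / sqrt m)\<^sup>2 / (2 * \<sigma>\<^sup>2))
         = exp (- (norm y)\<^sup>2 / (2 * \<sigma>\<^sup>2))"
      using key_alg[OF m0 A0, where s=s and Nsq="(norm y)\<^sup>2" and \<sigma>=\<sigma>] by (simp only: lam_def)
    ultimately have "(\<Prod>j\<in>UNIV. normal_density 0 \<sigma> (D y $ j)) * normal_density 0 \<sigma> (s * RS S (D y) / sqrt m)
        = (\<Prod>j\<in>UNIV. normal_density 0 \<sigma> (y $ j)) * c"
      using kk by (simp add: mult_ac)
    moreover have "RS S (D y) / sqrt m = RS S y / sqrt m * (1 / sqrt lam)"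
      by (simp add: RSD RSy)
    ultimately show ?thesis
      unfolding q_def
      by (simp add: ennreal_mult'[symmetric] prod_nonneg RS_nonneg mult_ac)
  qed
  have "(\<integral>\<^sup>+y. ennreal (normal_density 0 \<sigma> (s * RS S y / sqrt m) * (RS S y / sqrt m)) \<partial>error_law \<sigma>)
      = (\<integral>\<^sup>+y. q y \<partial>lborel)"
    unfolding error_law_def q_def by (rule nn_integral_density) simp_all
  also have "\<dots> = (\<integral>\<^sup>+y. q (D y) \<partial>lborel) * ennreal \<bar>det (matrix D)\<bar>"
    by (rule lin_cov[OF lin detD0 qm, symmetric])
  also have "\<dots> = (\<integral>\<^sup>+y. ?G y * ennreal (c * RS S y / sqrt m * (1 / sqrt lam)) \<partial>lborel) * ennreal ((1 / sqrt lam) ^ card S)"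
  proof -
    have ad: "\<bar>det (matrix D)\<bar> = (1 / sqrt lam) ^ card S" using l by (simp add: detD)
    show ?thesis by (simp only: qD ad)
  qed
  also have "\<dots> = (\<integral>\<^sup>+y. (?G y * ennreal (c * RS S y / sqrt m)) * ennreal (1 / sqrt lam) \<partial>lborel) * ennreal ((1 / sqrt lam) ^ card S)"
  proof -
    have "ennreal (c * RS S y / sqrt m * (1 / sqrt lam)) = ennreal (c * RS S y / sqrt m) * ennreal (1 / sqrt lam)" for y
      using c0 l m0 by (intro ennreal_mult) (simp_all add: RS_nonneg)
    then show ?thesis by (simp add: mult.assoc)
  qed
  also have "\<dots> = (\<integral>\<^sup>+y. ?G y * ennreal (c * RS S y / sqrt m) \<partial>lborel) * (ennreal (1 / sqrt lam) * ennreal ((1 / sqrt lam) ^ card S))"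
    by (subst nn_integral_multc) (simp_all add: mult.assoc)
  also have "ennreal (1 / sqrt lam) * ennreal ((1 / sqrt lam) ^ card S) = ennreal (lam powr (- (m + 1) / 2))"
  proof -
    have p1: "1 / sqrt lam = lam powr (- (1/2))"
      using l by (simp add: powr_minus_divide powr_half_sqrt)
    have "(1 / sqrt lam) * (1 / sqrt lam) ^ card S = (lam powr (- (1/2))) ^ (card S + 1)"
      by (simp only: p1 power_Suc Suc_eq_plus1[symmetric])
    also have "\<dots> = lam powr (of_nat (card S + 1) * (- (1/2)))"
      by (rule powr_power) (use l in simp)
    also have "of_nat (card S + 1) * (- (1/2)) = - (m + 1) / (2::real)"
      by (simp add: m_def field_simps)
    finally have e: "(1 / sqrt lam) * (1 / sqrt lam) ^ card S = lam powr (- (m + 1) / 2)" .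
    have pos1: "0 \<le> 1 / sqrt lam" and pos2: "0 \<le> (1 / sqrt lam) ^ card S" using l by simp_all
    show ?thesis by (simp only: ennreal_mult[OF pos1 pos2, symmetric] e)
  qed
  also have "(\<integral>\<^sup>+y. ?G y * ennreal (c * RS S y / sqrt m) \<partial>lborel) = (\<integral>\<^sup>+y. ennreal (c * RS S y / sqrt m) \<partial>error_law \<sigma>)"
    unfolding error_law_def by (rule nn_integral_density[symmetric]) simp_all
  finally show ?thesis by (simp add: c_def mult_ac)
qed

lemma gamma_scale:
  fixes a L :: real assumes a: "a > 0" and L: "L > 0"
  shows "(\<integral>\<^sup>+t. ennreal (indicator {0..} t * t powr (a - 1) / exp (L * t)) \<partial>lborel)
         = ennreal (Gamma a * L powr (-a))"
proof -
  let ?f = "\<lambda>u::real. ennreal (indicator {0..} u * u powr (a - 1) / exp u)"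
  let ?X = "(\<integral>\<^sup>+t. ennreal (indicator {0..} t * t powr (a - 1) / exp (L * t)) \<partial>lborel)"
  have fm: "?f \<in> borel_measurable borel" by measurable
  have "ennreal (Gamma a) = (\<integral>\<^sup>+u. ?f u \<partial>lborel)"
    using Gamma_conv_nn_integral_real[OF a] by simp
  also have "\<dots> = ennreal \<bar>L\<bar> * (\<integral>\<^sup>+t. ?f (0 + L * t) \<partial>lborel)"
    by (rule nn_integral_real_affine[OF fm]) (use L in simp)
  also have "(\<integral>\<^sup>+t. ?f (0 + L * t) \<partial>lborel)
      = (\<integral>\<^sup>+t. ennreal (L powr (a - 1)) * ennreal (indicator {0..} t * t powr (a - 1) / exp (L * t)) \<partial>lborel)"
  proof (rule nn_integral_cong)
    fix t :: real
    show "?f (0 + L * t) = ennreal (L powr (a - 1)) * ennreal (indicator {0..} t * t powr (a - 1) / exp (L * t))"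
    proof (cases "t \<ge> 0")
      case True
      then have "(L * t) powr (a - 1) = L powr (a - 1) * t powr (a - 1)"
        using L by (simp add: powr_mult)
      with True L show ?thesis
        by (simp add: ennreal_mult'[symmetric] zero_le_mult_iff mult_ac)
    next
      case False
      with L have "\<not> 0 \<le> L * t" by (simp add: zero_le_mult_iff)
      with False show ?thesis by (simp add: indicator_def)
    qed
  qed
  also have "\<dots> = ennreal (L powr (a - 1)) * ?X"
    by (rule nn_integral_cmult) measurable
  finally have eq: "ennreal (Gamma a) = ennreal L * (ennreal (L powr (a - 1)) * ?X)"
    using L by simp
  have e1: "ennreal (L powr (-a) * L * L powr (a - 1)) = ennreal (L powr (-a)) * ennreal L * ennreal (L powr (a - 1))"
    using L by (simp add: ennreal_mult)
  have e2: "L powr (-a) * L * L powr (a - 1) = 1"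
    using L by (simp add: powr_minus_divide powr_diff field_simps)
  have "ennreal (L powr (-a)) * ennreal (Gamma a) = (ennreal (L powr (-a)) * ennreal L * ennreal (L powr (a - 1))) * ?X"
    by (simp add: eq mult_ac)
  also have "\<dots> = ?X" by (simp only: e1[symmetric] e2 ennreal_1 mult_1)
  finally have "?X = ennreal (L powr (-a)) * ennreal (Gamma a)" by simp
  also have "\<dots> = ennreal (Gamma a * L powr (-a))"
    using L a by (simp add: ennreal_mult mult.commute)
  finally show ?thesis .
qed

lemma gauss_int:
  fixes t m :: real assumes t: "t > 0" and m: "m > 0"
  shows "(\<integral>\<^sup>+s. ennreal (exp (- (t * s\<^sup>2 / m))) \<partial>lborel) = ennreal (sqrt (pi * m / t))"
proof -
  define \<sigma> where "\<sigma> = sqrt (m / (2 * t))"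
  have s2: "\<sigma>\<^sup>2 = m / (2 * t)" unfolding \<sigma>_def using t m by simp
  have nd: "normal_density 0 \<sigma> s = 1 / sqrt (pi * m / t) * exp (- (t * s\<^sup>2 / m))" for s
  proof -
    have "2 * pi * \<sigma>\<^sup>2 = pi * m / t" using t by (simp add: s2)
    moreover have "s\<^sup>2 / (2 * \<sigma>\<^sup>2) = t * s\<^sup>2 / m" using t m by (simp add: s2 field_simps)
    ultimately show ?thesis by (simp add: normal_density_def)
  qed
  have one: "(\<integral>\<^sup>+s. ennreal (normal_density 0 \<sigma> s) \<partial>lborel) = 1"
  proof -
    have sp: "\<sigma> > 0" unfolding \<sigma>_def using t m by simp
    show ?thesis using sp by (subst nn_integral_eq_integral) (simp_all add: integrable_normal_density integral_normal_density)
  qed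
  have pos: "sqrt (pi * m / t) > 0" using t m by (intro real_sqrt_gt_zero divide_pos_pos mult_pos_pos pi_gt_zero)
  have "(\<integral>\<^sup>+s. ennreal (exp (- (t * s\<^sup>2 / m))) \<partial>lborel)
      = (\<integral>\<^sup>+s. ennreal (sqrt (pi * m / t)) * ennreal (normal_density 0 \<sigma> s) \<partial>lborel)"
    using pos t m by (intro nn_integral_cong) (simp add: nd ennreal_mult'[symmetric])
  also have "\<dots> = ennreal (sqrt (pi * m / t))"
    by (subst nn_integral_cmult) (simp_all add: one)
  finally show ?thesis .
qed

lemma I_value:
  fixes m :: real assumes m: "m > 0"
  shows "(\<integral>\<^sup>+s. ennreal ((1 + s\<^sup>2 / m) powr (- (m + 1) / 2)) \<partial>lborel)
       = ennreal (sqrt (m * pi) * Gamma (m / 2) / Gamma ((m + 1) / 2))"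
proof -
  define a where "a = (m + 1) / 2"
  have a0: "a > 0" unfolding a_def using m by simp
  have Ga: "Gamma a > 0" using a0 by simp
  define F where "F s t = ennreal (indicator {0..} t * t powr (a - 1) / exp ((1 + s\<^sup>2 / m) * t))" for s t :: real
  have Fm: "case_prod F \<in> borel_measurable (lborel \<Otimes>\<^sub>M lborel)" unfolding F_def by measurable
  have lampos: "1 + s\<^sup>2 / m > 0" for s using m by (simp add: add_pos_nonneg)
  have step1: "ennreal ((1 + s\<^sup>2 / m) powr (- (m + 1) / 2)) = ennreal (1 / Gamma a) * (\<integral>\<^sup>+t. F s t \<partial>lborel)" for s
  proof -
    have "(\<integral>\<^sup>+t. F s t \<partial>lborel) = ennreal (Gamma a * (1 + s\<^sup>2 / m) powr (-a))"
      unfolding F_def by (rule gamma_scale[OF a0 lampos])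
    then show ?thesis using Ga
      by (simp add: ennreal_mult'[symmetric] a_def minus_divide_left)
  qed
  have "(\<integral>\<^sup>+s. ennreal ((1 + s\<^sup>2 / m) powr (- (m + 1) / 2)) \<partial>lborel)
      = (\<integral>\<^sup>+s. ennreal (1 / Gamma a) * (\<integral>\<^sup>+t. F s t \<partial>lborel) \<partial>lborel)"
    by (rule nn_integral_cong) (rule step1)
  also have "\<dots> = ennreal (1 / Gamma a) * (\<integral>\<^sup>+s. (\<integral>\<^sup>+t. F s t \<partial>lborel) \<partial>lborel)"
    by (rule nn_integral_cmult) (use Fm in measurable)
  also have "(\<integral>\<^sup>+s. (\<integral>\<^sup>+t. F s t \<partial>lborel) \<partial>lborel) = (\<integral>\<^sup>+t. (\<integral>\<^sup>+s. F s t \<partial>lborel) \<partial>lborel)"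
    by (rule lborel_pair.Fubini'[OF Fm, symmetric])
  also have "\<dots> = (\<integral>\<^sup>+t. ennreal (sqrt (pi * m)) * ennreal (indicator {0..} t * t powr (m / 2 - 1) / exp t) \<partial>lborel)"
  proof (rule nn_integral_cong)
    fix t :: real
    have Fst: "F s t = ennreal (indicator {0..} t * t powr (a - 1) / exp t) * ennreal (exp (- (t * s\<^sup>2 / m)))" for s
    proof -
      have "exp ((1 + s\<^sup>2 / m) * t) = exp t * exp (t * s\<^sup>2 / m)"
        by (simp add: exp_add[symmetric] algebra_simps)
      then have "indicator {0..} t * t powr (a - 1) / exp ((1 + s\<^sup>2 / m) * t)
          = (indicator {0..} t * t powr (a - 1) / exp t) * exp (- (t * s\<^sup>2 / m))"
        by (simp add: exp_minus field_simps)
      then show ?thesis unfolding F_def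
        by (simp add: ennreal_mult'[symmetric] indicator_def)
    qed
    have "(\<integral>\<^sup>+s. F s t \<partial>lborel) = ennreal (indicator {0..} t * t powr (a - 1) / exp t) * (\<integral>\<^sup>+s. ennreal (exp (- (t * s\<^sup>2 / m))) \<partial>lborel)"
      unfolding Fst by (rule nn_integral_cmult) measurable
    also have "\<dots> = ennreal (sqrt (pi * m)) * ennreal (indicator {0..} t * t powr (m / 2 - 1) / exp t)"
    proof (cases "t > 0")
      case True
      have "t powr (a - 1) * sqrt (pi * m / t) = sqrt (pi * m) * t powr (m / 2 - 1)"
      proof -
        have "sqrt (pi * m / t) = sqrt (pi * m) * t powr (- (1/2))"
          using True m by (simp add: real_sqrt_divide powr_minus_divide powr_half_sqrt)
        moreover have "t powr (a - 1) * t powr (- (1/2)) = t powr (m / 2 - 1)"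
        proof -
          have ex: "a - 1 + - (1/2) = m / 2 - 1" by (simp add: a_def field_simps)
          have "t powr (a - 1) * t powr (- (1/2)) = t powr (a - 1 + - (1/2))" by (rule powr_add[symmetric])
          then show ?thesis by (simp only: ex)
        qed
        ultimately show ?thesis by (simp add: mult_ac)
      qed
      then show ?thesis using True m
        by (simp add: gauss_int ennreal_mult'[symmetric] indicator_def mult_ac)
    next
      case False
      then have z1: "indicator {0..} t * t powr (a - 1) / exp t = 0" and z2: "indicator {0..} t * t powr (m / 2 - 1) / exp t = 0"
        by (auto simp: indicator_def)
      show ?thesis by (simp only: z1 z2 ennreal_0 mult_zero_left mult_zero_right)
    qed
    finally show "(\<integral>\<^sup>+s. F s t \<partial>lborel) = ennreal (sqrt (pi * m)) * ennreal (indicator {0..} t * t powr (m / 2 - 1) / exp t)" .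
  qed
  also have "\<dots> = ennreal (sqrt (pi * m)) * ennreal (Gamma (m / 2))"
    by (subst nn_integral_cmult) (simp_all add: Gamma_conv_nn_integral_real[of "m/2"] m)
  finally show ?thesis
    using Ga m by (simp add: ennreal_mult'[symmetric] a_def mult_ac)
qed

lemma AE_RS_pos:
  fixes S :: "'n::finite set"
  assumes sp: "0 < \<sigma>" and Sne: "S \<noteq> {}"
  shows "AE y in error_law \<sigma>. RS S y > 0"
proof -
  obtain j1 where j1: "j1 \<in> S" using Sne by auto
  have z: "emeasure (error_law \<sigma>) {y::real^'n. y$j1 = 0} = 0"
  proof -
    let ?F = "\<lambda>(t::real) (y::real^'n). indicator {0::real} t :: ennreal"
    have "emeasure (error_law \<sigma>) {y::real^'n. y$j1 = 0} = (\<integral>\<^sup>+y. ?F (y$j1) y \<partial>error_law \<sigma>)"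
    proof -
      have "{y::real^'n. y$j1 = 0} \<in> sets (error_law \<sigma>)" by simp
      then have "emeasure (error_law \<sigma>) {y::real^'n. y$j1 = 0} = (\<integral>\<^sup>+y. indicator {y::real^'n. y$j1 = 0} y \<partial>error_law \<sigma>)"
        by simp
      also have "\<dots> = (\<integral>\<^sup>+y. ?F (y$j1) y \<partial>error_law \<sigma>)"
        by (intro nn_integral_cong) (simp add: indicator_def)
      finally show ?thesis .
    qed
    also have "\<dots> = (\<integral>\<^sup>+y. (\<integral>\<^sup>+t. ?F t y \<partial>NM \<sigma>) \<partial>error_law \<sigma>)"
      by (rule int_out_j0[OF sp]) simp_all
    also have "\<dots> = (\<integral>\<^sup>+y. 0 \<partial>error_law \<sigma>)"
    proof -
      have "{0::real} \<in> null_sets (NM \<sigma>)"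
      proof (subst null_sets_density_iff)
        show "(\<lambda>x. ennreal (normal_density 0 \<sigma> x)) \<in> borel_measurable lborel" by simp
        show "{0::real} \<in> sets lborel \<and> (AE x in lborel. x \<in> {0} \<longrightarrow> ennreal (normal_density 0 \<sigma> x) = 0)"
        proof (rule conjI)
          show "AE x in lborel. x \<in> {0} \<longrightarrow> ennreal (normal_density 0 \<sigma> x) = 0"
            using AE_lborel_singleton[of "0::real"] by eventually_elim auto
        qed simp
      qed
      then have n0: "emeasure (NM \<sigma>) {0::real} = 0" by (rule null_setsD1)
      show ?thesis by (simp add: n0)
    qed
    finally show ?thesis by simp
  qed
  have AEj: "AE y in error_law \<sigma>. y$j1 \<noteq> 0"
  proof (subst AE_iff_null)
    show "{y \<in> space (error_law \<sigma>). \<not> y $ j1 \<noteq> 0} \<in> sets (error_law \<sigma>)" by simp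
    show "{y \<in> space (error_law \<sigma>). \<not> y $ j1 \<noteq> 0} \<in> null_sets (error_law \<sigma>)"
      using z by (intro null_setsI) (simp_all add: error_law_def)
  qed
  have pos: "RS S y > 0" if "y$j1 \<noteq> 0" for y :: "real^'n"
  proof -
    have "(y$j1)\<^sup>2 > 0" using that by simp
    also have "(y$j1)\<^sup>2 \<le> (\<Sum>j\<in>S. (y$j)\<^sup>2)"
      using j1 member_le_sum[where f="\<lambda>j. (y$j)\<^sup>2" and A=S and i=j1] by simp
    finally show "RS S y > 0" unfolding RS_def by simp
  qed
  show ?thesis using AEj by eventually_elim (rule pos)
qed

lemma E_eq:
  fixes S :: "'n::finite set" and j0 :: 'n and x \<sigma> :: real
  assumes sp: "0 < \<sigma>" and Sne: "S \<noteq> {}" and j0S: "j0 \<notin> S"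
  defines "m \<equiv> real (card S)"
  shows "emeasure (error_law \<sigma>) {y. y$j0 \<le> x * RS S y / sqrt m}
       = (\<integral>\<^sup>+y. ennreal (1 / sqrt (2 * pi * \<sigma>\<^sup>2) * RS S y / sqrt m) \<partial>error_law \<sigma>) *
         (\<integral>\<^sup>+s. indicator {..x} s * ennreal ((1 + s\<^sup>2 / m) powr (- (m + 1) / 2)) \<partial>lborel)"
proof -
  have m0: "m > 0" unfolding m_def using Sne by (simp add: card_gt_0_iff)
  define F where "F t y = (if t \<le> x * RS S y / sqrt m then 1 else 0 :: ennreal)" for t and y :: "real^'n"
  define G where "G s y = ennreal (normal_density 0 \<sigma> (s * RS S y / sqrt m) * (RS S y / sqrt m))" for s and y :: "real^'n"
  define K where "K = (\<integral>\<^sup>+y. ennreal (1 / sqrt (2 * pi * \<sigma>\<^sup>2) * RS S y / sqrt m) \<partial>error_law \<sigma>)"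
  define h where "h s = (1 + s\<^sup>2 / m) powr (- (m + 1) / 2)" for s :: real
  have Fm: "(\<lambda>p. F (fst p) (snd p)) \<in> borel_measurable (borel \<Otimes>\<^sub>M (borel :: (real^'n) measure))"
    unfolding F_def by measurable
  have inv: "F t (\<chi> j. if j = j0 then s else y$j) = F t y" for t s and y :: "real^'n"
  proof -
    have "RS S (\<chi> j. if j = j0 then s else y$j) = RS S y"
      unfolding RS_def using j0S by (intro arg_cong[where f=sqrt] sum.cong) auto
    then show ?thesis by (simp add: F_def)
  qed
  have "emeasure (error_law \<sigma>) {y. y$j0 \<le> x * RS S y / sqrt m} = (\<integral>\<^sup>+y. F (y$j0) y \<partial>error_law \<sigma>)"
  proof -
    have "{y::real^'n. y$j0 \<le> x * RS S y / sqrt m} \<in> sets (error_law \<sigma>)" by simp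
    then have "emeasure (error_law \<sigma>) {y. y$j0 \<le> x * RS S y / sqrt m} = (\<integral>\<^sup>+y. indicator {y::real^'n. y$j0 \<le> x * RS S y / sqrt m} y \<partial>error_law \<sigma>)"
      by (rule nn_integral_indicator[symmetric])
    also have "\<dots> = (\<integral>\<^sup>+y. F (y$j0) y \<partial>error_law \<sigma>)"
      by (intro nn_integral_cong) (simp add: F_def indicator_def)
    finally show ?thesis .
  qed
  also have "\<dots> = (\<integral>\<^sup>+y. (\<integral>\<^sup>+t. F t y \<partial>NM \<sigma>) \<partial>error_law \<sigma>)"
    by (rule int_out_j0[OF sp Fm inv])
  also have "\<dots> = (\<integral>\<^sup>+y. (\<integral>\<^sup>+s. indicator {..x} s * G s y \<partial>lborel) \<partial>error_law \<sigma>)"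
  proof (rule nn_integral_cong_AE)
    show "AE y in error_law \<sigma>. (\<integral>\<^sup>+t. F t y \<partial>NM \<sigma>) = (\<integral>\<^sup>+s. indicator {..x} s * G s y \<partial>lborel)"
      using AE_RS_pos[OF sp Sne]
    proof eventually_elim
      fix y :: "real^'n" assume R: "RS S y > 0"
      define r where "r = RS S y / sqrt m"
      have r0: "r > 0" unfolding r_def using R m0 by simp
      have Fy[measurable]: "(\<lambda>t. F t y) \<in> borel_measurable borel" unfolding F_def by measurable
      have "(\<integral>\<^sup>+t. F t y \<partial>NM \<sigma>) = (\<integral>\<^sup>+t. ennreal (normal_density 0 \<sigma> t) * F t y \<partial>lborel)"
        by (rule nn_integral_density) simp_all
      also have "\<dots> = ennreal \<bar>r\<bar> * (\<integral>\<^sup>+s. ennreal (normal_density 0 \<sigma> (0 + r * s)) * F (0 + r * s) y \<partial>lborel)"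
        by (rule nn_integral_real_affine) (use r0 in simp_all)
      also have "\<dots> = (\<integral>\<^sup>+s. ennreal r * (ennreal (normal_density 0 \<sigma> (r * s)) * F (r * s) y) \<partial>lborel)"
        using r0 by (subst nn_integral_cmult) simp_all
      also have "\<dots> = (\<integral>\<^sup>+s. indicator {..x} s * G s y \<partial>lborel)"
      proof (rule nn_integral_cong)
        fix s :: real
        have e: "x * RS S y / sqrt m = r * x" by (simp add: r_def)
        have Fr: "F (r * s) y = indicator {..x} s"
          using r0 by (simp add: F_def e indicator_def mult_le_cancel_left_pos)
        have G': "G s y = ennreal (normal_density 0 \<sigma> (r * s)) * ennreal r"
        proof -
          have e2: "s * RS S y / sqrt m = r * s" by (simp add: r_def)
          show ?thesis unfolding G_def e2 using r0 by (simp add: ennreal_mult r_def[symmetric])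
        qed
        show "ennreal r * (ennreal (normal_density 0 \<sigma> (r * s)) * F (r * s) y) = indicator {..x} s * G s y"
          by (simp add: Fr G' mult_ac)
      qed
      finally show "(\<integral>\<^sup>+t. F t y \<partial>NM \<sigma>) = (\<integral>\<^sup>+s. indicator {..x} s * G s y \<partial>lborel)" .
    qed
  qed
  also have "\<dots> = (\<integral>\<^sup>+s. (\<integral>\<^sup>+y. indicator {..x} s * G s y \<partial>error_law \<sigma>) \<partial>lborel)"
  proof -
    interpret EL: prob_space "error_law \<sigma> :: (real^'n) measure" by (rule prob_space_error_law[OF sp])
    interpret PS: pair_sigma_finite lborel "error_law \<sigma> :: (real^'n) measure" ..
    have "(\<lambda>(s, y). indicator {..x} s * G s y) \<in> borel_measurable (lborel \<Otimes>\<^sub>M (error_law \<sigma> :: (real^'n) measure))"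
      unfolding G_def by measurable
    then show ?thesis by (rule PS.Fubini')
  qed
  also have "\<dots> = (\<integral>\<^sup>+s. indicator {..x} s * (ennreal (h s) * K) \<partial>lborel)"
  proof (rule nn_integral_cong)
    fix s :: real
    have "(\<integral>\<^sup>+y. indicator {..x} s * G s y \<partial>error_law \<sigma>) = indicator {..x} s * (\<integral>\<^sup>+y. G s y \<partial>error_law \<sigma>)"
      by (rule nn_integral_cmult) (simp add: G_def)
    also have "(\<integral>\<^sup>+y. G s y \<partial>error_law \<sigma>) = ennreal (h s) * K"
      unfolding G_def K_def h_def m_def by (rule scale_H[OF sp Sne])
    finally show "(\<integral>\<^sup>+y. indicator {..x} s * G s y \<partial>error_law \<sigma>) = indicator {..x} s * (ennreal (h s) * K)" .
  qed
  also have "\<dots> = K * (\<integral>\<^sup>+s. indicator {..x} s * ennreal (h s) \<partial>lborel)"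
    by (subst nn_integral_cmult[symmetric]) (simp_all add: h_def mult_ac)
  finally show ?thesis by (simp add: K_def h_def)
qed

lemma student_core:
  fixes S :: "'n::finite set" and j0 :: 'n and x \<sigma> :: real
  assumes sp: "0 < \<sigma>" and Sne: "S \<noteq> {}" and j0S: "j0 \<notin> S"
  shows "measure (error_law \<sigma>) {y. y$j0 \<le> x * RS S y / sqrt (real (card S))} = student_t_cdf (card S) x"
proof -
  interpret EL: prob_space "error_law \<sigma> :: (real^'n) measure" by (rule prob_space_error_law[OF sp])
  define m where "m = real (card S)"
  have m0: "m > 0" unfolding m_def using Sne by (simp add: card_gt_0_iff)
  define K where "K = (\<integral>\<^sup>+y. ennreal (1 / sqrt (2 * pi * \<sigma>\<^sup>2) * RS S y / sqrt m) \<partial>error_law \<sigma>)"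
  define h where "h s = (1 + s\<^sup>2 / m) powr (- (m + 1) / 2)" for s :: real
  define J where "J x = (\<integral>\<^sup>+s. indicator {..x} s * ennreal (h s) \<partial>lborel)" for x :: real
  define A where "A x = {y::real^'n. y$j0 \<le> x * RS S y / sqrt m}" for x :: real
  have EA: "emeasure (error_law \<sigma>) (A x) = K * J x" for x
    unfolding A_def K_def J_def h_def m_def by (rule E_eq[OF sp Sne j0S])
  have Asets: "A x \<in> sets (error_law \<sigma>)" for x unfolding A_def by simp
  have SUPE: "(SUP n. emeasure (error_law \<sigma>) (A (real n))) = 1"
  proof -
    have inc: "incseq (\<lambda>n. A (real n))"
    proof (rule incseq_SucI)
      fix n
      show "A (real n) \<subseteq> A (real (Suc n))"
      proof
        fix y assume "y \<in> A (real n)"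
        moreover have "real n * RS S y / sqrt m \<le> real (Suc n) * RS S y / sqrt m"
          using m0 RS_nonneg[of S y] by (intro divide_right_mono mult_right_mono) simp_all
        ultimately show "y \<in> A (real (Suc n))" unfolding A_def by simp
      qed
    qed
    have "(SUP n. emeasure (error_law \<sigma>) (A (real n))) = emeasure (error_law \<sigma>) (\<Union>n. A (real n))"
      by (rule SUP_emeasure_incseq) (use Asets inc in auto)
    also have "\<dots> = 1"
    proof (rule EL.emeasure_eq_1_AE)
      show "(\<Union>n. A (real n)) \<in> sets (error_law \<sigma>)" using Asets by auto
      show "AE y in error_law \<sigma>. y \<in> (\<Union>n. A (real n))"
        using AE_RS_pos[OF sp Sne]
      proof eventually_elim
        fix y :: "real^'n" assume R: "RS S y > 0"
        obtain n :: nat where n: "y$j0 * sqrt m / RS S y \<le> real n" using real_arch_simple by blast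
        have "y$j0 \<le> real n * RS S y / sqrt m"
          using n R m0 by (simp add: field_simps)
        then show "y \<in> (\<Union>n. A (real n))" unfolding A_def by auto
      qed
    qed
    finally show ?thesis .
  qed
  have SUPJ: "(SUP n. J (real n)) = (\<integral>\<^sup>+s. ennreal (h s) \<partial>lborel)"
  proof -
    have "(\<integral>\<^sup>+s. (SUP n. indicator {..real n} s * ennreal (h s)) \<partial>lborel) = (SUP n. J (real n))"
      unfolding J_def
    proof (rule nn_integral_monotone_convergence_SUP)
      show "incseq (\<lambda>n s. indicator {..real n} s * ennreal (h s))"
        by (rule incseq_SucI) (auto simp: le_fun_def indicator_def)
      show "\<And>i. (\<lambda>s. indicator {..real i} s * ennreal (h s)) \<in> borel_measurable lborel"
        unfolding h_def by measurable
    qed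
    moreover have "(SUP n. indicator {..real n} s * ennreal (h s)) = ennreal (h s)" for s
    proof (rule antisym)
      show "(SUP n. indicator {..real n} s * ennreal (h s)) \<le> ennreal (h s)"
        by (rule SUP_least) (simp add: indicator_def)
      obtain n :: nat where "s \<le> real n" using real_arch_simple by blast
      then show "ennreal (h s) \<le> (SUP n. indicator {..real n} s * ennreal (h s))"
        by (intro SUP_upper2[of n]) simp_all
    qed
    ultimately show ?thesis by simp
  qed
  define B where "B = sqrt (m * pi) * Gamma (m / 2) / Gamma ((m + 1) / 2)"
  have B0: "B > 0" unfolding B_def using m0 by (simp add: divide_pos_pos)
  have I: "(\<integral>\<^sup>+s. ennreal (h s) \<partial>lborel) = ennreal B"
    unfolding h_def B_def by (rule I_value[OF m0])
  have KB: "K * ennreal B = 1"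
  proof -
    have "K * ennreal B = K * (SUP n. J (real n))" by (simp add: SUPJ I)
    also have "\<dots> = (SUP n. K * J (real n))" by (rule SUP_mult_left_ennreal)
    also have "\<dots> = (SUP n. emeasure (error_law \<sigma>) (A (real n)))" by (simp add: EA)
    also have "\<dots> = 1" by (rule SUPE)
    finally show ?thesis .
  qed
  have K: "K = ennreal (1 / B)"
  proof -
    have "ennreal B * ennreal (1 / B) = 1" using B0 by (simp add: ennreal_mult[symmetric])
    then have "K = K * (ennreal B * ennreal (1 / B))" by simp
    also have "\<dots> = (K * ennreal B) * ennreal (1 / B)" by (simp add: mult.assoc)
    finally show ?thesis by (simp add: KB)
  qed
  have lhs: "measure (error_law \<sigma>) (A x) = 1 / B * enn2real (J x)"
    unfolding measure_def EA K using B0 by (simp add: enn2real_mult)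
  have dens: "student_t_density (card S) t = 1 / B * h t" for t
    unfolding student_t_density_def h_def B_def m_def by simp
  have dnn: "0 \<le> student_t_density (card S) t" for t
    unfolding dens using B0 by (simp add: h_def)
  have rhs: "student_t_cdf (card S) x = 1 / B * enn2real (J x)"
  proof -
    have "student_t_cdf (card S) x = integral\<^sup>L lborel (\<lambda>t. indicator {..x} t *\<^sub>R student_t_density (card S) t)"
      unfolding student_t_cdf_def set_lebesgue_integral_def ..
    also have "\<dots> = enn2real (\<integral>\<^sup>+t. ennreal (indicator {..x} t *\<^sub>R student_t_density (card S) t) \<partial>lborel)"
    proof (rule integral_eq_nn_integral)
      show "(\<lambda>t. indicator {..x} t *\<^sub>R student_t_density (card S) t) \<in> borel_measurable lborel"
        unfolding dens h_def by measurable
      show "AE t in lborel. 0 \<le> indicator {..x} t *\<^sub>R student_t_density (card S) t"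
        by (rule AE_I2) (simp add: dnn)
    qed
    also have "(\<integral>\<^sup>+t. ennreal (indicator {..x} t *\<^sub>R student_t_density (card S) t) \<partial>lborel)
        = (\<integral>\<^sup>+t. ennreal (1 / B) * (indicator {..x} t * ennreal (h t)) \<partial>lborel)"
    proof (rule nn_integral_cong)
      fix t
      have "ennreal (1 / B * h t) = ennreal (1 / B) * ennreal (h t)"
        using B0 by (intro ennreal_mult) (simp_all add: h_def)
      then show "ennreal (indicator {..x} t *\<^sub>R student_t_density (card S) t) = ennreal (1 / B) * (indicator {..x} t * ennreal (h t))"
        by (simp add: dens indicator_def)
    qed
    also have "\<dots> = ennreal (1 / B) * J x"
      unfolding J_def by (rule nn_integral_cmult) (simp add: h_def)
    finally show ?thesis using B0 by (simp add: enn2real_mult)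
  qed
  show ?thesis using lhs rhs unfolding A_def m_def by simp
qed

lemma orth_frame:
  fixes V :: "(real^'n) set" and e :: "real^'n"
  assumes sV: "subspace V" and e1: "norm e = 1" and eV: "\<And>v. v \<in> V \<Longrightarrow> e \<bullet> v = 0"
  obtains b :: "'n \<Rightarrow> real^'n" and j0 S where
    "\<And>j l. b j \<bullet> b l = (if j = l then 1 else 0)"
    "b j0 = e" "j0 \<notin> S" "card S = dim V"
    "\<And>j. j \<in> S \<Longrightarrow> b j \<in> V"
    "\<And>j v. j \<notin> S \<Longrightarrow> v \<in> V \<Longrightarrow> b j \<bullet> v = 0"
proof -
  obtain BV where BV: "BV \<subseteq> V" "pairwise orthogonal BV" "\<And>x. x \<in> BV \<Longrightarrow> norm x = 1"
      "independent BV" "card BV = dim V" "span BV = V"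
    using orthonormal_basis_subspace[OF sV] by metis
  define W where "W = span (insert e V)"
  define Z where "Z = {z. \<forall>x\<in>W. orthogonal x z}"
  have sZ: "subspace Z" unfolding Z_def by (rule subspace_orthogonal_to_vectors)
  obtain BZ where BZ: "BZ \<subseteq> Z" "pairwise orthogonal BZ" "\<And>x. x \<in> BZ \<Longrightarrow> norm x = 1"
      "independent BZ" "card BZ = dim Z"
    using orthonormal_basis_subspace[OF sZ] by metis
  have finBV: "finite BV" using BV(4) by (rule independent_imp_finite)
  have finBZ: "finite BZ" using BZ(4) by (rule independent_imp_finite)
  have e0: "e \<noteq> 0" using e1 by auto
  have eNV: "e \<notin> V" using eV[of e] e1 by (auto simp: dot_square_norm)
  have dW: "dim W = dim V + 1"
  proof -
    have "dim W = dim (insert e V)" unfolding W_def by (rule dim_span)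
    also have "\<dots> = dim V + 1"
    proof -
      have "e \<notin> span V" using eNV sV by (metis span_eq_iff)
      then show ?thesis by (simp add: dim_insert)
    qed
    finally show ?thesis .
  qed
  have dZ: "dim Z + dim W = CARD('n)"
  proof -
    have "dim {y \<in> UNIV. \<forall>x\<in>W. orthogonal x y} + dim W = dim (UNIV :: (real^'n) set)"
      by (rule dim_subspace_orthogonal_to_vectors) (simp_all add: W_def subspace_span)
    then show ?thesis by (simp add: Z_def)
  qed
  have eW: "e \<in> W" unfolding W_def by (simp add: span_base)
  have VW: "V \<subseteq> W" unfolding W_def by (auto intro: span_base)
  have Zorth: "z \<in> Z \<Longrightarrow> x \<in> W \<Longrightarrow> x \<bullet> z = 0" for z x unfolding Z_def orthogonal_def by auto
  define B where "B = insert e (BV \<union> BZ)"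
  have eBV: "e \<notin> BV" using BV(1) eNV by auto
  have eBZ: "e \<notin> BZ"
  proof
    assume "e \<in> BZ"
    then have "e \<bullet> e = 0" using Zorth[of e e] BZ(1) eW by auto
    then show False using e0 by simp
  qed
  have BVZ: "BV \<inter> BZ = {}"
  proof (rule ccontr)
    assume "BV \<inter> BZ \<noteq> {}"
    then obtain x where x: "x \<in> BV" "x \<in> BZ" by auto
    then have "x \<bullet> x = 0" using Zorth[of x x] BZ(1) BV(1) VW by auto
    then show False using BV(3)[OF x(1)] by simp
  qed
  have finB: "finite B" unfolding B_def using finBV finBZ by simp
  have cardB: "card B = CARD('n)"
  proof -
    have "card B = Suc (card BV + card BZ)"
      unfolding B_def using finBV finBZ eBV eBZ BVZ by (simp add: card_Un_disjoint)
    also have "\<dots> = CARD('n)" using BV(5) BZ(5) dW dZ by simp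
    finally show ?thesis .
  qed
  obtain h where h: "bij_betw h (UNIV :: 'n set) B"
    using finite_same_card_bij[of "UNIV::'n set" B] finB cardB by auto
  have hinj: "inj h" using h by (simp add: bij_betw_def)
  have hB: "range h = B" using h by (simp add: bij_betw_def)
  have onorm: "norm x = 1" if "x \<in> B" for x
    using that e1 BV(3) BZ(3) unfolding B_def by auto
  have oorth: "x \<bullet> y = 0" if "x \<in> B" "y \<in> B" "x \<noteq> y" for x y
  proof -
    have Vo: "v \<bullet> z = 0" if "v \<in> V" "z \<in> BZ" for v z using Zorth[of z v] that BZ(1) VW by auto
    have Vo': "z \<bullet> v = 0" if "v \<in> V" "z \<in> BZ" for v z using Vo[OF that] by (simp add: inner_commute)
    have eo: "e \<bullet> z = 0" if "z \<in> BZ" for z using Zorth[of z e] that BZ(1) eW by auto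
    have eo': "z \<bullet> e = 0" if "z \<in> BZ" for z using eo[OF that] by (simp add: inner_commute)
    have ev': "v \<bullet> e = 0" if "v \<in> V" for v using eV[OF that] by (simp add: inner_commute)
    have bvo: "x \<bullet> y = 0" if "x \<in> BV" "y \<in> BV" "x \<noteq> y" for x y
      using BV(2) that unfolding pairwise_def orthogonal_def by auto
    have bzo: "x \<bullet> y = 0" if "x \<in> BZ" "y \<in> BZ" "x \<noteq> y" for x y
      using BZ(2) that unfolding pairwise_def orthogonal_def by auto
    from that show ?thesis unfolding B_def
      using BV(1) Vo Vo' eo eo' ev' eV bvo bzo by blast
  qed
  obtain j0 where j0: "h j0 = e" using hB unfolding B_def by (metis insertI1 rangeE)
  define S where "S = h -` BV"
  show thesis
  proof
    show "h j \<bullet> h l = (if j = l then 1 else 0)" for j l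
    proof (cases "j = l")
      case True
      have "h j \<in> B" using hB by auto
      then show ?thesis using True onorm by (simp add: dot_square_norm)
    next
      case False
      then have "h j \<noteq> h l" using hinj by (auto dest: injD)
      moreover have "h j \<in> B" "h l \<in> B" using hB by auto
      ultimately show ?thesis using False oorth by simp
    qed
    show "h j0 = e" by (rule j0)
    show "j0 \<notin> S" unfolding S_def using j0 eBV by simp
    show "card S = dim V"
    proof -
      have "card S = card BV" unfolding S_def
        by (rule card_vimage_inj[OF hinj]) (use hB B_def in auto)
      then show ?thesis using BV(5) by simp
    qed
    show "h j \<in> V" if "j \<in> S" for j using that BV(1) unfolding S_def by auto
    show "h j \<bullet> v = 0" if "j \<notin> S" "v \<in> V" for j v
    proof -
      have "h j \<in> B" using hB by auto
      then have "h j = e \<or> h j \<in> BZ" using that(1) unfolding S_def B_def by auto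
      then show ?thesis
      proof
        assume "h j = e" then show ?thesis using eV[OF that(2)] by simp
      next
        assume "h j \<in> BZ"
        then show ?thesis using Zorth[of "h j" v] BZ(1) VW that(2) by (auto simp: inner_commute)
      qed
    qed
  qed
qed

lemma frame_sum_inner:
  fixes b :: "'n::finite \<Rightarrow> real^'n"
  assumes bo: "\<And>j l. b j \<bullet> b l = (if j = l then 1 else 0)"
  shows "(\<Sum>j\<in>A. y$j *\<^sub>R b j) \<bullet> (\<Sum>j\<in>A. y$j *\<^sub>R b j) = (\<Sum>j\<in>A. (y$j)\<^sup>2)"
proof -
  have "(\<Sum>j\<in>A. y$j *\<^sub>R b j) \<bullet> (\<Sum>j\<in>A. y$j *\<^sub>R b j) = (\<Sum>j\<in>A. y$j * (\<Sum>l\<in>A. y$l * (b l \<bullet> b j)))"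
    by (simp add: inner_sum_left inner_sum_right)
  also have "\<dots> = (\<Sum>j\<in>A. y$j * y$j)"
    by (intro sum.cong refl) (simp add: bo if_distrib sum.delta cong: if_cong)
  also have "\<dots> = (\<Sum>j\<in>A. (y$j)\<^sup>2)"
    by (simp add: power2_eq_square)
  finally show ?thesis .
qed

lemma frame_Q:
  fixes b :: "'n::finite \<Rightarrow> real^'n"
  assumes bo: "\<And>j l. b j \<bullet> b l = (if j = l then 1 else 0)"
  defines "Q y \<equiv> \<Sum>j\<in>UNIV. y$j *\<^sub>R b j"
  shows "orthogonal_transformation Q" and "b j0 \<bullet> Q y = y$j0"
    and "Q y = (\<Sum>j\<in>S. y$j *\<^sub>R b j) + (\<Sum>j\<in>-S. y$j *\<^sub>R b j)"
    and "norm (\<Sum>j\<in>S. y$j *\<^sub>R b j) = RS S y"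
proof -
  have lin: "linear Q" unfolding Q_def
    by (rule linearI) (simp_all add: scaleR_add_left sum.distrib scaleR_sum_right)
  have "norm (Q v) = norm v" for v
  proof -
    have "(norm (Q v))\<^sup>2 = (\<Sum>j\<in>UNIV. (v$j)\<^sup>2)"
      unfolding power2_norm_eq_inner Q_def by (rule frame_sum_inner[OF bo])
    also have "\<dots> = (norm v)\<^sup>2"
      by (subst power2_norm_eq_inner) (simp add: inner_vec_def power2_eq_square)
    finally show ?thesis by simp
  qed
  then show "orthogonal_transformation Q" using lin by (simp add: orthogonal_transformation)
  show "b j0 \<bullet> Q y = y$j0"
    unfolding Q_def by (simp add: inner_sum_right bo if_distrib cong: if_cong)
  show "Q y = (\<Sum>j\<in>S. y$j *\<^sub>R b j) + (\<Sum>j\<in>-S. y$j *\<^sub>R b j)"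
    unfolding Q_def using sum.If_cases[of UNIV "\<lambda>j. j \<in> S" "\<lambda>j. y$j *\<^sub>R b j" "\<lambda>j. y$j *\<^sub>R b j"]
    by (simp add: Int_def Compl_eq)
  show "norm (\<Sum>j\<in>S. y$j *\<^sub>R b j) = RS S y"
    unfolding RS_def norm_eq_sqrt_inner by (simp add: frame_sum_inner[OF bo])
qed

lemma inner_mv: "((M :: real^'a^'b) *v x) \<bullet> y = x \<bullet> (transpose M *v y)"
proof -
  have "((M :: real^'a^'b) *v x) \<bullet> y = (\<Sum>i\<in>UNIV. \<Sum>j\<in>UNIV. M$i$j * x$j * y$i)"
    by (simp add: inner_vec_def matrix_vector_mult_def sum_distrib_right)
  also have "\<dots> = (\<Sum>j\<in>UNIV. \<Sum>i\<in>UNIV. M$i$j * x$j * y$i)" by (rule sum.swap)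
  also have "\<dots> = x \<bullet> (transpose M *v y)"
    by (simp add: inner_vec_def matrix_vector_mult_def transpose_def sum_distrib_left mult_ac
             del: transpose_matrix_vector)
  finally show ?thesis .
qed

lemma matrix_inv_both:
  fixes M :: "real^'n^'n" assumes "invertible M"
  shows "M ** matrix_inv M = mat 1" and "matrix_inv M ** M = mat 1"
proof -
  have "\<exists>A'. M ** A' = mat 1 \<and> A' ** M = mat 1" using assms by (simp add: invertible_def)
  then have "M ** matrix_inv M = mat 1 \<and> matrix_inv M ** M = mat 1"
    unfolding matrix_inv_def by (rule someI_ex)
  then show "M ** matrix_inv M = mat 1" and "matrix_inv M ** M = mat 1" by auto
qed

lemma matrix_inv_unique:
  fixes M B :: "real^'n^'n" assumes "M ** B = mat 1" "B ** M = mat 1"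
  shows "matrix_inv M = B"
proof -
  have inv: "invertible M" using assms unfolding invertible_def by blast
  have "matrix_inv M = matrix_inv M ** (M ** B)" using assms by simp
  also have "\<dots> = (matrix_inv M ** M) ** B" by (simp add: matrix_mul_assoc)
  also have "\<dots> = B" using matrix_inv_both[OF inv] by simp
  finally show ?thesis .
qed

context
  fixes X :: "real^'k^'n"
  assumes rk: "rank X = CARD('k)"
begin

definition "XtX = transpose X ** X"
definition "Ai = matrix_inv XtX"
definition "AX = Ai ** transpose X"

lemma X_inj: "inj ((*v) X)" using rk by (simp add: full_rank_injective)

lemma XtX_inv: "invertible XtX"
proof -
  have "inj ((*v) XtX)"
  proof (rule injI)
    fix c d :: "real^'k" assume "XtX *v c = XtX *v d"
    then have z: "XtX *v (c - d) = 0" by (simp add: matrix_vector_mult_diff_distrib)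
    have "(X *v (c - d)) \<bullet> (X *v (c - d)) = (c - d) \<bullet> (XtX *v (c - d))"
      by (simp add: inner_mv XtX_def matrix_vector_mul_assoc del: transpose_matrix_vector)
    also have "\<dots> = 0" by (simp add: z)
    finally have "X *v (c - d) = 0" by simp
    then have "X *v c = X *v d" by (simp add: matrix_vector_mult_diff_distrib)
    then show "c = d" using X_inj by (auto dest: injD)
  qed
  then obtain B where "B ** XtX = mat 1" using matrix_left_invertible_injective by blast
  then show ?thesis using invertible_left_inverse by blast
qed

lemma Ai_left: "Ai ** XtX = mat 1" and Ai_right: "XtX ** Ai = mat 1"
  using matrix_inv_both[OF XtX_inv] by (simp_all add: Ai_def)

lemma XtX_sym: "transpose XtX = XtX"
  by (simp add: XtX_def matrix_transpose_mul)

lemma Ai_sym: "transpose Ai = Ai"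
proof -
  have "transpose Ai ** XtX = mat 1"
    using arg_cong[OF Ai_right, of transpose] by (simp add: matrix_transpose_mul XtX_sym)
  then have "transpose Ai = transpose Ai ** (XtX ** Ai)" by (simp add: Ai_right)
  also have "\<dots> = (transpose Ai ** XtX) ** Ai" by (simp add: matrix_mul_assoc)
  also have "\<dots> = Ai" by (simp add: \<open>transpose Ai ** XtX = mat 1\<close>)
  finally show ?thesis .
qed

lemma AX_X: "AX ** X = mat 1"
  by (simp add: AX_def matrix_mul_assoc[symmetric] XtX_def[symmetric] Ai_left)

lemma theta_LS_eq: "theta_LS X y = AX *v y"
  by (simp add: theta_LS_def AX_def XtX_def[symmetric] Ai_def[symmetric] matrix_vector_mul_assoc
           del: transpose_matrix_vector)

lemma theta_LS_model: "theta_LS X (X *v \<theta> + u) = \<theta> + AX *v u"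
  by (simp add: theta_LS_eq matrix_vector_right_distrib matrix_vector_mul_assoc AX_X)

definition "resid u = u - X *v (AX *v u)"

lemma resid_model: "(X *v \<theta> + u) - X *v theta_LS X (X *v \<theta> + u) = resid u"
  unfolding theta_LS_model resid_def by (simp add: matrix_vector_right_distrib)

definition "Vsp = {v :: real^'n. transpose X *v v = 0}"

lemma resid_V: "resid u \<in> Vsp"
proof -
  have "transpose X *v resid u = transpose X *v u - transpose X *v (X *v (AX *v u))"
    by (simp add: resid_def matrix_vector_mult_diff_distrib del: transpose_matrix_vector)
  also have "transpose X *v (X *v (AX *v u)) = XtX *v (Ai *v (transpose X *v u))"
    by (simp only: XtX_def AX_def matrix_vector_mul_assoc matrix_mul_assoc)
  also have "XtX *v (Ai *v (transpose X *v u)) = transpose X *v u"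
    by (simp only: matrix_vector_mul_assoc matrix_mul_assoc Ai_right matrix_mul_lid)
  also have "transpose X *v u - transpose X *v u = 0" by simp
  finally show ?thesis by (simp add: Vsp_def del: transpose_matrix_vector)
qed

lemma colX_orth: "v \<in> Vsp \<Longrightarrow> (X *v c) \<bullet> v = 0"
  by (simp add: inner_mv Vsp_def del: transpose_matrix_vector)

lemma resid_orth: "v \<in> Vsp \<Longrightarrow> (u - resid u) \<bullet> v = 0"
  by (simp add: resid_def colX_orth)

lemma subspace_Vsp: "subspace Vsp"
  unfolding Vsp_def subspace_def
  by (simp add: matrix_vector_right_distrib matrix_vector_mult_scaleR del: transpose_matrix_vector)

lemma dim_Vsp: "dim Vsp = CARD('n) - CARD('k)"
proof -
  have eq: "{y \<in> UNIV. \<forall>x\<in>range ((*v) X). orthogonal x y} = Vsp"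
  proof safe
    fix y :: "real^'n" assume "\<forall>x\<in>range ((*v) X). orthogonal x y"
    then have "(X *v (transpose X *v y)) \<bullet> y = 0" by (auto simp: orthogonal_def)
    then have "(transpose X *v y) \<bullet> (transpose X *v y) = 0"
      by (simp add: inner_mv del: transpose_matrix_vector)
    then show "y \<in> Vsp" by (simp add: Vsp_def del: transpose_matrix_vector)
  next
    fix y :: "real^'n" and c assume "y \<in> Vsp"
    then show "orthogonal (X *v c) y" by (simp add: orthogonal_def colX_orth)
  qed simp
  have "dim {y \<in> UNIV. \<forall>x\<in>range ((*v) X). orthogonal x y} + dim (range ((*v) X)) = dim (UNIV :: (real^'n) set)"
    by (rule dim_subspace_orthogonal_to_vectors) (simp_all add: subspace_UNIV linear_subspace_image)
  moreover have rkdim: "dim (range ((*v) X)) = CARD('k)" using rk by (simp add: rank_dim_range)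
  ultimately have "dim Vsp + CARD('k) = CARD('n)" unfolding eq by simp
  then show ?thesis by simp
qed

definition "wv i = (\<chi> j. AX $ i $ j)"
definition "zv i = (\<chi> l. Ai $ i $ l)"

lemma AX_comp: "(AX *v u) $ i = wv i \<bullet> u"
  by (simp add: wv_def inner_vec_def matrix_vector_mult_def)

lemma wv_X: "wv i = X *v zv i"
  by (simp add: wv_def zv_def AX_def vec_eq_iff matrix_matrix_mult_def matrix_vector_mult_def transpose_def mult_ac)

lemma wv_orth: "v \<in> Vsp \<Longrightarrow> wv i \<bullet> v = 0"
  by (simp add: wv_X colX_orth)

lemma zv_eq: "zv i = Ai *v axis i 1"
proof -
  have "Ai $ i $ l = Ai $ l $ i" for l
    using arg_cong[OF Ai_sym, of "\<lambda>M. M $ l $ i"] by (simp add: transpose_def)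
  then show ?thesis
    by (simp add: zv_def vec_eq_iff matrix_vector_mult_def axis_def if_distrib cong: if_cong)
qed

lemma wv_norm2: "wv i \<bullet> wv i = Ai $ i $ i"
proof -
  have "wv i \<bullet> wv i = zv i \<bullet> (XtX *v zv i)"
    by (simp add: wv_X inner_mv XtX_def matrix_vector_mul_assoc del: transpose_matrix_vector)
  also have "XtX *v zv i = axis i 1"
    by (simp add: zv_eq matrix_vector_mul_assoc Ai_right)
  also have "zv i \<bullet> axis i 1 = Ai $ i $ i" by (simp add: inner_axis zv_def)
  finally show ?thesis .
qed

lemma wv_nz: "wv i \<noteq> 0"
proof
  assume "wv i = 0"
  then have "X *v zv i = X *v 0" by (metis wv_X matrix_vector_mult_0_right)
  then have "zv i = 0" by (rule injD[OF X_inj])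
  then have "XtX *v zv i = 0" by simp
  moreover have "XtX *v zv i = axis i 1"
    by (simp add: zv_eq matrix_vector_mul_assoc Ai_right)
  ultimately show False by (simp add: axis_eq_0_iff)
qed

lemma xi_eq: "xi X i = sqrt (real CARD('n)) * norm (wv i)"
proof -
  let ?n = "real CARD('n)"
  have n0: "?n > 0" by simp
  have "matrix_inv ((1 / ?n) *\<^sub>R XtX) = ?n *\<^sub>R Ai"
  proof (rule matrix_inv_unique)
    show "((1 / ?n) *\<^sub>R XtX) ** (?n *\<^sub>R Ai) = mat 1"
      using n0 by (simp add: matrix_scalar_ac scalar_matrix_assoc[symmetric] Ai_right)
    show "(?n *\<^sub>R Ai) ** ((1 / ?n) *\<^sub>R XtX) = mat 1"
      using n0 by (simp add: matrix_scalar_ac scalar_matrix_assoc[symmetric] Ai_left)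
  qed
  then have "xi X i = sqrt (?n * Ai $ i $ i)"
    by (simp add: xi_def XtX_def[symmetric])
  also have "\<dots> = sqrt ?n * norm (wv i)"
    by (simp add: real_sqrt_mult wv_norm2[symmetric] norm_eq_sqrt_inner)
  finally show ?thesis .
qed

end

lemma mv_meas[measurable]:
  assumes "f \<in> borel_measurable M"
  shows "(\<lambda>x. (A :: real^'a^'b) *v f x) \<in> borel_measurable M"
proof -
  have "(\<lambda>y. A *v y) \<in> borel_measurable borel"
    by (rule linear_borel_meas) (rule matrix_vector_mul_linear)
  from measurable_comp[OF assms this] show ?thesis by (simp add: o_def)
qed

lemma sigma_hat_meas[measurable]: "sigma_hat X \<in> borel_measurable borel"
  unfolding sigma_hat_def theta_LS_def by measurable

lemma vec_nth_meas[measurable]: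
  assumes "f \<in> borel_measurable M"
  shows "(\<lambda>x. (f x :: real^'n) $ i) \<in> borel_measurable M"
proof -
  have "(\<lambda>v::real^'n. v $ i) \<in> borel_measurable borel"
    by (rule linear_borel_meas) (rule linearI, simp_all)
  from measurable_comp[OF assms this] show ?thesis by (simp add: o_def)
qed

lemma theta_LS_meas[measurable]: "(\<lambda>y. theta_LS X y $ i) \<in> borel_measurable borel"
  unfolding theta_LS_def by measurable

lemma Eset_meas: "{y. t \<in> E_H X \<eta> a i y} \<in> sets borel"
proof -
  have "{y. t \<in> E_H X \<eta> a i y} = {y. theta_H X \<eta> i y - sigma_hat X y * a \<le> t \<and> t \<le> theta_H X \<eta> i y + sigma_hat X y * a}"
    by (auto simp: E_H_def)
  also have "\<dots> \<in> sets borel"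
    unfolding theta_H_def by measurable
  finally show ?thesis .
qed

lemma measure_orth_inv:
  fixes Q :: "real^'n \<Rightarrow> real^'n"
  assumes Q: "orthogonal_transformation Q" and G: "G \<in> sets borel"
  shows "measure (error_law \<sigma>) {y. Q y \<in> G} = measure (error_law \<sigma>) G"
proof -
  have Qm[measurable]: "Q \<in> borel_measurable borel"
    by (rule linear_borel_meas[OF orthogonal_transformation_linear[OF Q]])
  have Gm[measurable]: "G \<in> sets borel" by (rule G)
  have "emeasure (error_law \<sigma>) {y. Q y \<in> G} = (\<integral>\<^sup>+y. indicator G (Q y) \<partial>error_law \<sigma>)"
  proof -
    have "{y. Q y \<in> G} \<in> sets (error_law \<sigma>)" by simp
    then have "emeasure (error_law \<sigma>) {y. Q y \<in> G} = (\<integral>\<^sup>+y. indicator {y. Q y \<in> G} y \<partial>error_law \<sigma>)"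
      by (rule nn_integral_indicator[symmetric])
    also have "\<dots> = (\<integral>\<^sup>+y. indicator G (Q y) \<partial>error_law \<sigma>)"
      by (intro nn_integral_cong) (simp add: indicator_def)
    finally show ?thesis .
  qed
  also have "\<dots> = (\<integral>\<^sup>+y. indicator G y \<partial>error_law \<sigma>)"
    by (rule error_law_orth_inv[OF Q]) simp
  also have "\<dots> = emeasure (error_law \<sigma>) G" by simp
  finally show ?thesis by (simp add: measure_def)
qed

context
  fixes X :: "real^'k^'n"
  assumes rk: "rank X = CARD('k)"
begin

lemma resid_frame:
  fixes b :: "'n \<Rightarrow> real^'n" and S :: "'n set"
  assumes bV: "\<And>j. j \<in> S \<Longrightarrow> b j \<in> Vsp X"
    and bO: "\<And>j v. j \<notin> S \<Longrightarrow> v \<in> Vsp X \<Longrightarrow> b j \<bullet> v = 0"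
    and Qy: "q = (\<Sum>j\<in>S. y$j *\<^sub>R b j) + (\<Sum>j\<in>-S. y$j *\<^sub>R b j)"
  shows "resid X q = (\<Sum>j\<in>S. y$j *\<^sub>R b j)"
proof -
  let ?v = "\<Sum>j\<in>S. y$j *\<^sub>R b j" and ?w = "\<Sum>j\<in>-S. y$j *\<^sub>R b j"
  have sV: "subspace (Vsp X)" by (rule subspace_Vsp[OF rk])
  have vV: "?v \<in> Vsp X"
    by (rule subspace_sum[OF sV]) (use bV subspace_scale[OF sV] in auto)
  have wO: "?w \<bullet> z = 0" if "z \<in> Vsp X" for z
    using bO that by (simp add: inner_sum_left)
  define r where "r = resid X q"
  have rV: "r \<in> Vsp X" unfolding r_def by (rule resid_V[OF rk])
  have rO: "(q - r) \<bullet> z = 0" if "z \<in> Vsp X" for z unfolding r_def by (rule resid_orth[OF rk that])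
  define D where "D = r - ?v"
  have DV: "D \<in> Vsp X" unfolding D_def by (rule subspace_diff[OF sV rV vV])
  have "D = ?w - (q - r)" unfolding D_def Qy by simp
  then have "D \<bullet> D = ?w \<bullet> D - (q - r) \<bullet> D" by (simp add: inner_diff_left)
  also have "\<dots> = 0" using wO[OF DV] rO[OF DV] by simp
  finally have "D = 0" by simp
  then show ?thesis unfolding D_def r_def by simp
qed

lemma cover_bound:
  fixes \<theta> :: "real^'k" and \<sigma> \<eta> a :: real and i :: 'k
  assumes nk: "CARD('n) > CARD('k)" and eta: "\<eta> > 0" and a0: "a \<ge> 0" and sp: "\<sigma> > 0"
  shows "student_t_cdf (CARD('n) - CARD('k)) (sqrt (real CARD('n)) * (a / xi X i - \<eta>))
           - student_t_cdf (CARD('n) - CARD('k)) (- sqrt (real CARD('n)) * a / xi X i)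
         \<le> measure (P_model X \<theta> \<sigma>) {y. \<theta> $ i \<in> E_H X \<eta> a i y}"
proof -
  interpret EL: prob_space "error_law \<sigma> :: (real^'n) measure" by (rule prob_space_error_law[OF sp])
  define nn where "nn = real CARD('n)"
  define mr where "mr = real (CARD('n) - CARD('k))"
  have mr0: "mr > 0" unfolding mr_def using nk by simp
  have mr_eq: "real CARD('n) - real CARD('k) = mr" unfolding mr_def using nk by (simp add: of_nat_diff)
  define w where "w = wv X i"
  have w0: "norm w > 0" unfolding w_def using wv_nz[OF rk] by simp
  have xi: "xi X i = sqrt nn * norm w" unfolding nn_def w_def by (rule xi_eq[OF rk])
  define s where "s = (if \<theta> $ i \<ge> 0 then -1 else 1 :: real)"
  define e where "e = (s / norm w) *\<^sub>R w"
  have e1: "norm e = 1" unfolding e_def s_def using w0 by simp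
  have eV: "e \<bullet> v = 0" if "v \<in> Vsp X" for v
    unfolding e_def w_def using wv_orth[OF rk that] by simp
  obtain b :: "'n \<Rightarrow> real^'n" and j0 S where
    bo: "\<And>j l. b j \<bullet> b l = (if j = l then 1 else 0)" and bj0: "b j0 = e" and j0S: "j0 \<notin> S"
    and cS: "card S = dim (Vsp X)" and bV: "\<And>j. j \<in> S \<Longrightarrow> b j \<in> Vsp X"
    and bO: "\<And>j v. j \<notin> S \<Longrightarrow> v \<in> Vsp X \<Longrightarrow> b j \<bullet> v = 0"
    using orth_frame[OF subspace_Vsp[OF rk] e1 eV] by metis
  have cardS: "card S = CARD('n) - CARD('k)" using cS dim_Vsp[OF rk] by simp
  have Sne: "S \<noteq> {}" using cardS nk by auto
  have mrS: "real (card S) = mr" unfolding mr_def cardS ..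
  define Q where "Q y = (\<Sum>j\<in>UNIV. y$j *\<^sub>R b j)" for y :: "real^'n"
  have orthQ: "orthogonal_transformation Q" unfolding Q_def by (rule frame_Q(1)[OF bo])
  have eQ: "e \<bullet> Q y = y$j0" for y unfolding Q_def bj0[symmetric] by (rule frame_Q(2)[OF bo])
  have rQ: "norm (resid X (Q y)) = RS S y" for y
  proof -
    have qd: "Q y = (\<Sum>j\<in>S. y$j *\<^sub>R b j) + (\<Sum>j\<in>-S. y$j *\<^sub>R b j)"
      unfolding Q_def by (rule frame_Q(3)[OF bo])
    have "resid X (Q y) = (\<Sum>j\<in>S. y$j *\<^sub>R b j)"
      by (rule resid_frame[OF bV bO qd])
    then show ?thesis by (simp add: frame_Q(4)[OF bo])
  qed
  define rho where "rho u = norm (resid X u) / sqrt mr" for u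
  define c0 where "c0 = - sqrt (real CARD('n)) * a / xi X i"
  define d0 where "d0 = sqrt (real CARD('n)) * (a / xi X i - \<eta>)"
  define Good where "Good = {u. c0 * rho u \<le> e \<bullet> u \<and> e \<bullet> u \<le> d0 * rho u}"
  define Eset where "Eset = {y. \<theta> $ i \<in> E_H X \<eta> a i y}"
  have Eset_m: "Eset \<in> sets borel" unfolding Eset_def by (rule Eset_meas)
  have rr: "resid X = (\<lambda>u. u - X *v (AX X *v u))" by (rule ext) (simp add: resid_def[OF rk])
  have rm[measurable]: "(\<lambda>u. resid X u) \<in> borel_measurable borel" unfolding rr by measurable
  have rho_m[measurable]: "rho \<in> borel_measurable borel" unfolding rho_def by measurable
  have Good_m: "Good \<in> sets borel" unfolding Good_def by measurable
  have sub: "Good \<subseteq> {u. X *v \<theta> + u \<in> Eset}"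
  proof
    fix u assume "u \<in> Good"
    then have g1: "c0 * rho u \<le> e \<bullet> u" and g2: "e \<bullet> u \<le> d0 * rho u" unfolding Good_def by auto
    define D where "D = w \<bullet> u"
    define \<rho> where "\<rho> = rho u"
    have \<rho>0: "\<rho> \<ge> 0" unfolding \<rho>_def rho_def using mr0 by simp
    have thLS: "theta_LS X (X *v \<theta> + u) $ i = \<theta> $ i + D"
      unfolding D_def w_def by (simp add: theta_LS_model[OF rk] AX_comp[OF rk])
    have sh: "sigma_hat X (X *v \<theta> + u) = \<rho>"
      unfolding sigma_hat_def resid_model[OF rk] \<rho>_def rho_def mr_eq
      by (simp add: real_sqrt_divide)
    have eu: "e \<bullet> u = s * D / norm w" unfolding e_def D_def by simp
    have sn0: "sqrt nn > 0" unfolding nn_def by simp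
    have c0e: "c0 = - a / norm w" unfolding c0_def xi nn_def[symmetric] using sn0 w0 by (simp add: field_simps)
    have d0e: "d0 = a / norm w - sqrt nn * \<eta>" unfolding d0_def xi nn_def[symmetric] using sn0 w0 by (simp add: field_simps)
    have h1: "- (\<rho> * a) \<le> s * D"
    proof -
      have "- a / norm w * \<rho> \<le> s * D / norm w" using g1 by (simp add: c0e eu \<rho>_def)
      then show ?thesis using w0 by (simp add: field_simps)
    qed
    have P0: "\<rho> * xi X i * \<eta> \<ge> 0" unfolding xi nn_def using \<rho>0 eta by (intro mult_nonneg_nonneg) simp_all
    have h2: "s * D \<le> \<rho> * a - \<rho> * xi X i * \<eta>"
    proof -
      have hyp: "s * D / norm w \<le> (a / norm w - sqrt nn * \<eta>) * \<rho>" using g2 by (simp add: d0e eu \<rho>_def)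
      have e: "(a / norm w - sqrt nn * \<eta>) * \<rho> = ((a - sqrt nn * norm w * \<eta>) * \<rho>) / norm w"
        using w0 by (simp add: field_simps)
      have "s * D / norm w \<le> ((a - sqrt nn * norm w * \<eta>) * \<rho>) / norm w" using hyp e by simp
      then have "s * D \<le> (a - sqrt nn * norm w * \<eta>) * \<rho>" using w0 by (simp add: divide_le_cancel)
      then show ?thesis unfolding xi by (simp add: algebra_simps)
    qed
    have mem: "\<theta> $ i \<in> E_H X \<eta> a i (X *v \<theta> + u)"
    proof (cases "\<theta> $ i \<ge> 0")
      case True
      then have s: "s = -1" unfolding s_def by simp
      show ?thesis
        using h1 h2 P0 True a0 \<rho>0 unfolding s
        by (auto simp: E_H_def theta_H_def thLS sh abs_if)
    next
      case False
      then have s: "s = 1" unfolding s_def by simp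
      show ?thesis
        using h1 h2 P0 False a0 \<rho>0 unfolding s
        by (auto simp: E_H_def theta_H_def thLS sh abs_if)
    qed
    then show "u \<in> {u. X *v \<theta> + u \<in> Eset}" by (simp add: Eset_def)
  qed
  have shiftm: "(\<lambda>u. X *v \<theta> + u) \<in> error_law \<sigma> \<rightarrow>\<^sub>M lborel" by simp
  have "measure (P_model X \<theta> \<sigma>) Eset = measure (error_law \<sigma>) ((\<lambda>u. X *v \<theta> + u) -` Eset \<inter> space (error_law \<sigma>))"
    unfolding P_model_def by (rule measure_distr[OF shiftm]) (simp add: Eset_m)
  also have "\<dots> = measure (error_law \<sigma>) {u. X *v \<theta> + u \<in> Eset}"
  proof -
    have "space (error_law \<sigma>) = UNIV" by (simp add: error_law_def)
    then have "(\<lambda>u. X *v \<theta> + u) -` Eset \<inter> space (error_law \<sigma>) = {u. X *v \<theta> + u \<in> Eset}" by auto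
    then show ?thesis by simp
  qed
  finally have PM: "measure (P_model X \<theta> \<sigma>) Eset = measure (error_law \<sigma>) {u. X *v \<theta> + u \<in> Eset}" .
  have "measure (error_law \<sigma>) Good \<le> measure (error_law \<sigma>) {u. X *v \<theta> + u \<in> Eset}"
  proof (rule EL.finite_measure_mono[OF sub])
    have [measurable]: "Eset \<in> sets borel" by (rule Eset_m)
    show "{u. X *v \<theta> + u \<in> Eset} \<in> sets (error_law \<sigma>)" by measurable
  qed
  moreover have "measure (error_law \<sigma>) Good = measure (error_law \<sigma>) {y. Q y \<in> Good}"
    by (rule measure_orth_inv[OF orthQ Good_m, symmetric])
  moreover have "{y. Q y \<in> Good} = {y. c0 * RS S y / sqrt mr \<le> y$j0 \<and> y$j0 \<le> d0 * RS S y / sqrt mr}"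
    unfolding Good_def rho_def by (simp add: eQ rQ)
  moreover have "student_t_cdf (card S) d0 - student_t_cdf (card S) c0
      \<le> measure (error_law \<sigma>) {y. c0 * RS S y / sqrt mr \<le> y$j0 \<and> y$j0 \<le> d0 * RS S y / sqrt mr}"
  proof -
    have A: "measure (error_law \<sigma>) {y. y$j0 \<le> d0 * RS S y / sqrt mr} = student_t_cdf (card S) d0"
      using student_core[OF sp Sne j0S, of d0] by (simp add: mrS)
    have C: "measure (error_law \<sigma>) {y. y$j0 \<le> c0 * RS S y / sqrt mr} = student_t_cdf (card S) c0"
      using student_core[OF sp Sne j0S, of c0] by (simp add: mrS)
    have "{y. y$j0 \<le> d0 * RS S y / sqrt mr} \<subseteq>
          {y. c0 * RS S y / sqrt mr \<le> y$j0 \<and> y$j0 \<le> d0 * RS S y / sqrt mr} \<union> {y. y$j0 \<le> c0 * RS S y / sqrt mr}"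
      by auto
    then have "measure (error_law \<sigma>) {y. y$j0 \<le> d0 * RS S y / sqrt mr}
        \<le> measure (error_law \<sigma>) ({y. c0 * RS S y / sqrt mr \<le> y$j0 \<and> y$j0 \<le> d0 * RS S y / sqrt mr} \<union> {y. y$j0 \<le> c0 * RS S y / sqrt mr})"
      by (rule EL.finite_measure_mono) simp
    also have "\<dots> \<le> measure (error_law \<sigma>) {y. c0 * RS S y / sqrt mr \<le> y$j0 \<and> y$j0 \<le> d0 * RS S y / sqrt mr}
                   + measure (error_law \<sigma>) {y. y$j0 \<le> c0 * RS S y / sqrt mr}"
      by (rule measure_Un_le) simp_all
    finally show ?thesis using A C by simp
  qed
  ultimately have "student_t_cdf (card S) d0 - student_t_cdf (card S) c0 \<le> measure (P_model X \<theta> \<sigma>) Eset"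
    using PM by simp
  then show ?thesis unfolding Eset_def c0_def d0_def cardS .
qed

end

theorem proposition14:
  fixes X :: "real^'k^'n" and i :: 'k and \<eta> a :: real
  assumes "rank X = CARD('k)"
    and "CARD('n) \<ge> 2" and "CARD('n) > CARD('k)"
    and "\<eta> > 0" and "a \<ge> 0"
  shows "(INF p \<in> (UNIV :: (real^'k) set) \<times> {0<..}.
            measure (P_model X (fst p) (snd p)) {y. fst p $ i \<in> E_H X \<eta> a i y})
         \<ge> student_t_cdf (CARD('n) - CARD('k))
               (sqrt (real CARD('n)) * (a / xi X i - \<eta>))
           - student_t_cdf (CARD('n) - CARD('k))
               (- sqrt (real CARD('n)) * a / xi X i)"
proof (rule cINF_greatest)
  have "(0, 1) \<in> (UNIV :: (real^'k) set) \<times> {(0::real)<..}" by simp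
  then show "(UNIV :: (real^'k) set) \<times> {(0::real)<..} \<noteq> {}" by blast
  fix p :: "(real^'k) \<times> real" assume "p \<in> (UNIV :: (real^'k) set) \<times> {0<..}"
  then have sp: "snd p > 0" by auto
  show "student_t_cdf (CARD('n) - CARD('k)) (sqrt (real CARD('n)) * (a / xi X i - \<eta>))
           - student_t_cdf (CARD('n) - CARD('k)) (- sqrt (real CARD('n)) * a / xi X i)
        \<le> measure (P_model X (fst p) (snd p)) {y. fst p $ i \<in> E_H X \<eta> a i y}"
    by (rule cover_bound[OF assms(1) assms(3) assms(4) assms(5) sp])
qed

end
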